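(* Let $H$ be a quasi-bialgebra, $\mathcal{A}$ an $H$-bimodule algebra and $\mathbb{A}$ an $H$-bicomodule algebra. Define on $\mathcal{A}\otimes\mathbb{A}$ (elements written $\varphi\natural u$) the product $$(\varphi\natural u)(\psi\natural u')=(\tilde{x}^1_{\lambda}\cdot\varphi\cdot\theta^3u'_{<1>}\tilde{x}^2_{\rho})(\tilde{x}^2_{\lambda}u_{[-1]}\theta^1\cdot\psi\cdot\tilde{x}^3_{\rho})\natural\tilde{x}^3_{\lambda}u_{[0]}\theta^2u'_{<0>}\tilde{x}^1_{\rho}$$ for $\varphi,\psi\in\mathcal{A}$, $u,u'\in\mathbb{A}$. Then this product makes $\mathcal{A}\otimes\mathbb{A}$ an associative algebra with unit $1_{\mathcal{A}}\natural 1_{\mathbb{A}}$ (called the L-R-smash product $\mathcal{A}\natural\mathbb{A}$).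
   Context: Work over a field $k$; $\otimes=\otimes_k$. A quasi-bialgebra is $(H,\Delta,\varepsilon,\Phi)$ where $H$ is a unital associative algebra, $\Delta:H\to H\otimes H$ ($\Delta(h)=h_1\otimes h_2$) and $\varepsilon:H\to k$ are algebra maps, and $\Phi\in H^{\otimes 3}$ is invertible, such that $(id\otimes\Delta)\Delta(h)=\Phi(\Delta\otimes id)(\Delta(h))\Phi^{-1}$, $(id\otimes\varepsilon)\Delta(h)=h\otimes 1$, $(\varepsilon\otimes id)\Delta(h)=1\otimes h$, $(1\otimes\Phi)(id\otimes\Delta\otimes id)(\Phi)(\Phi\otimes 1)=(id\otimes id\otimes\Delta)(\Phi)(\Delta\otimes id\otimes id)(\Phi)$, and $(id\otimes\varepsilon\otimes id)(\Phi)=1\otimes1\otimes1$. Write $\Phi=X^1\otimes X^2\otimes X^3$, $\Phi^{-1}=x^1\otimes x^2\otimes x^3$ (summation implicit). An $H$-bimodule algebra is an $H$-bimodule $\mathcal{A}$ (actions $h\cdot\varphi$, $\varphi\cdot h$) with a bilinear multiplication (not necessarily associative) and unit $1_{\mathcal{A}}$ such that $(\varphi\psi)\xi=(X^1\cdot\varphi\cdot x^1)[(X^2\cdot\psi\cdot x^2)(X^3\cdot\xi\cdot x^3)]$, $h\cdot(\varphi\psi)=(h_1\cdot\varphi)(h_2\cdot\psi)$, $(\varphi\psi)\cdot h=(\varphi\cdot h_1)(\psi\cdot h_2)$, $h\cdot 1_{\mathcal{A}}=1_{\mathcal{A}}\cdot h=\varepsilon(h)1_{\mathcal{A}}$. A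 right $H$-comodule algebra is a unital associative algebra $\mathfrak{A}$ with an algebra map $\rho:\mathfrak{A}\to\mathfrak{A}\otimes H$ and an invertible $\Phi_\rho\in\mathfrak{A}\otimes H\otimes H$ with $\Phi_\rho(\rho\otimes id)\rho(a)=(id\otimes\Delta)\rho(a)\Phi_\rho$, $(1\otimes\Phi)(id\otimes\Delta\otimes id)(\Phi_\rho)(\Phi_\rho\otimes 1)=(id\otimes id\otimes\Delta)(\Phi_\rho)(\rho\otimes id\otimes id)(\Phi_\rho)$, $(id\otimes\varepsilon)\rho=id$, $(id\otimes\varepsilon\otimes id)(\Phi_\rho)=(id\otimes id\otimes\varepsilon)(\Phi_\rho)=1\otimes 1$. A left $H$-comodule algebra is a unital associative algebra $\mathfrak{B}$ with algebra map $\lambda:\mathfrak{B}\to H\otimes\mathfrak{B}$ and invertible $\Phi_\lambda\in H\otimes H\otimes\mathfrak{B}$ with $(id\otimes\lambda)\lambda(b)\Phi_\lambda=\Phi_\lambda(\Delta\otimes id)\lambda(b)$, $(1\otimes\Phi_\lambda)(id\otimes\Delta\otimes id)(\Phi_\lambda)(\Phi\otimes 1)=(id\otimes id\otimes\lambda)(\Phi_\lambda)(\Delta\otimes id\otimes id)(\Phi_\lambda)$, $(\varepsilon\otimes id)\lambda=id$, $(id\otimes\varepsilon\otimes id)(\Phi_\lambda)=(\varepsilon\otimes id\otimes id)(\Phi_\lambda)=1\otimes 1$. An $H$-bicomodule algebra is $(\mathbb{A},\lambda,\rho,\Phi_\lambda,\Phi_\rho,\Phi_{\lambda,\rho})$ with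 $(\mathbb{A},\lambda,\Phi_\lambda)$ a left and $(\mathbb{A},\rho,\Phi_\rho)$ a right $H$-comodule algebra, and $\Phi_{\lambda,\rho}\in H\otimes\mathbb{A}\otimes H$ invertible with $\Phi_{\lambda,\rho}(\lambda\otimes id)\rho(u)=(id\otimes\rho)\lambda(u)\Phi_{\lambda,\rho}$, $(1\otimes\Phi_{\lambda,\rho})(id\otimes\lambda\otimes id)(\Phi_{\lambda,\rho})(\Phi_\lambda\otimes 1)=(id\otimes id\otimes\rho)(\Phi_\lambda)(\Delta\otimes id\otimes id)(\Phi_{\lambda,\rho})$, $(1\otimes\Phi_\rho)(id\otimes\rho\otimes id)(\Phi_{\lambda,\rho})(\Phi_{\lambda,\rho}\otimes 1)=(id\otimes id\otimes\Delta)(\Phi_{\lambda,\rho})(\lambda\otimes id\otimes id)(\Phi_\rho)$. Notation: $\rho(u)=u_{<0>}\otimes u_{<1>}$, $\lambda(u)=u_{[-1]}\otimes u_{[0]}$; $\Phi_\rho^{-1}=\tilde{x}^1_\rho\otimes\tilde{x}^2_\rho\otimes\tilde{x}^3_\rho$, $\Phi_\lambda^{-1}=\tilde{x}^1_\lambda\otimes\tilde{x}^2_\lambda\otimes\tilde{x}^3_\lambda$, $\Phi_{\lambda,\rho}=\Theta^1\otimes\Theta^2\otimes\Theta^3$, $\Phi_{\lambda,\rho}^{-1}=\theta^1\otimes\theta^2\otimes\theta^3$; for $u\in\mathbb{A}$, $(\theta^2)_{[-1]}$ etc. denote coaction components. *)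

theory Defs
  imports Main "HOL-Library.Poly_Mapping"
begin

text \<open>Vector spaces over a field k are modelled as free vector spaces
  'b =>0 'k (finitely supported coefficient functions on a basis 'b).
  The tensor product of the spaces with bases 'a and 'b is the free space on 'a \<times> 'b.
  Linear/bilinear maps are given by their values on basis vectors and extended.\<close>

definition vsc :: "'k::field \<Rightarrow> ('b \<Rightarrow>\<^sub>0 'k) \<Rightarrow> ('b \<Rightarrow>\<^sub>0 'k)" where
  "vsc c x = Poly_Mapping.map (\<lambda>a. c * a) x"

definition bas :: "'b \<Rightarrow> ('b \<Rightarrow>\<^sub>0 'k::field)" where
  "bas i = Poly_Mapping.single i 1"

definition lin :: "('a \<Rightarrow> ('b \<Rightarrow>\<^sub>0 'k::field)) \<Rightarrow> ('a \<Rightarrow>\<^sub>0 'k) \<Rightarrow> ('b \<Rightarrow>\<^sub>0 'k)" where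
  "lin f x = (\<Sum>i\<in>Poly_Mapping.keys x. vsc (Poly_Mapping.lookup x i) (f i))"

definition lfun :: "('a \<Rightarrow> 'k::field) \<Rightarrow> ('a \<Rightarrow>\<^sub>0 'k) \<Rightarrow> 'k" where
  "lfun f x = (\<Sum>i\<in>Poly_Mapping.keys x. Poly_Mapping.lookup x i * f i)"

definition bilin :: "('a \<Rightarrow> 'b \<Rightarrow> ('c \<Rightarrow>\<^sub>0 'k::field)) \<Rightarrow> ('a \<Rightarrow>\<^sub>0 'k) \<Rightarrow> ('b \<Rightarrow>\<^sub>0 'k) \<Rightarrow> ('c \<Rightarrow>\<^sub>0 'k)" where
  "bilin m x y = (\<Sum>i\<in>Poly_Mapping.keys x. \<Sum>j\<in>Poly_Mapping.keys y. vsc (Poly_Mapping.lookup x i * Poly_Mapping.lookup y j) (m i j))"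

definition tens :: "('a \<Rightarrow>\<^sub>0 'k::field) \<Rightarrow> ('b \<Rightarrow>\<^sub>0 'k) \<Rightarrow> ('a \<times> 'b \<Rightarrow>\<^sub>0 'k)" where
  "tens x y = (\<Sum>i\<in>Poly_Mapping.keys x. \<Sum>j\<in>Poly_Mapping.keys y. Poly_Mapping.single (i, j) (Poly_Mapping.lookup x i * Poly_Mapping.lookup y j))"

definition tmap :: "('a \<Rightarrow> ('c \<Rightarrow>\<^sub>0 'k::field)) \<Rightarrow> ('b \<Rightarrow> ('d \<Rightarrow>\<^sub>0 'k)) \<Rightarrow> 'a \<times> 'b \<Rightarrow> ('c \<times> 'd \<Rightarrow>\<^sub>0 'k)" where
  "tmap f g = (\<lambda>(a, b). tens (f a) (g b))"

definition tmult :: "('a \<Rightarrow> 'a \<Rightarrow> ('a \<Rightarrow>\<^sub>0 'k::field)) \<Rightarrow> ('b \<Rightarrow> 'b \<Rightarrow> ('b \<Rightarrow>\<^sub>0 'k))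
    \<Rightarrow> 'a \<times> 'b \<Rightarrow> 'a \<times> 'b \<Rightarrow> ('a \<times> 'b \<Rightarrow>\<^sub>0 'k)" where
  "tmult m n = (\<lambda>(a, b) (c, d). tens (m a c) (n b d))"

definition reas :: "('a \<times> 'b) \<times> 'c \<Rightarrow> ('a \<times> 'b \<times> 'c \<Rightarrow>\<^sub>0 'k::field)" where
  "reas = (\<lambda>((a, b), c). bas (a, (b, c)))"

definition app1 :: "('d \<Rightarrow>\<^sub>0 'k::field) \<Rightarrow> 'a \<times> 'b \<times> 'c \<Rightarrow> ('a \<times> 'b \<times> 'c \<times> 'd \<Rightarrow>\<^sub>0 'k)" where
  "app1 e = (\<lambda>(a, b, c). tens (bas a) (tens (bas b) (tens (bas c) e)))"

definition epsR :: "('h \<Rightarrow> 'k::field) \<Rightarrow> 'a \<times> 'h \<Rightarrow> ('a \<Rightarrow>\<^sub>0 'k)" where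
  "epsR e = (\<lambda>(a, h). vsc (e h) (bas a))"
definition epsL :: "('h \<Rightarrow> 'k::field) \<Rightarrow> 'h \<times> 'a \<Rightarrow> ('a \<Rightarrow>\<^sub>0 'k)" where
  "epsL e = (\<lambda>(h, a). vsc (e h) (bas a))"

definition epsFirst :: "('h \<Rightarrow> 'k::field) \<Rightarrow> 'h \<times> 'b \<times> 'c \<Rightarrow> ('b \<times> 'c \<Rightarrow>\<^sub>0 'k)" where
  "epsFirst e = (\<lambda>(a, b, c). vsc (e a) (tens (bas b) (bas c)))"
definition epsMid :: "('h \<Rightarrow> 'k::field) \<Rightarrow> 'a \<times> 'h \<times> 'c \<Rightarrow> ('a \<times> 'c \<Rightarrow>\<^sub>0 'k)" where
  "epsMid e = (\<lambda>(a, b, c). vsc (e b) (tens (bas a) (bas c)))"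
definition epsLast :: "('h \<Rightarrow> 'k::field) \<Rightarrow> 'a \<times> 'b \<times> 'h \<Rightarrow> ('a \<times> 'b \<Rightarrow>\<^sub>0 'k)" where
  "epsLast e = (\<lambda>(a, b, c). vsc (e c) (tens (bas a) (bas b)))"

definition assoc_alg :: "('a \<Rightarrow> 'a \<Rightarrow> ('a \<Rightarrow>\<^sub>0 'k::field)) \<Rightarrow> ('a \<Rightarrow>\<^sub>0 'k) \<Rightarrow> bool" where
  "assoc_alg m u \<longleftrightarrow>
     (\<forall>x y z. bilin m (bilin m x y) z = bilin m x (bilin m y z)) \<and>
     (\<forall>x. bilin m u x = x \<and> bilin m x u = x)"

definition alg_map :: "('a \<Rightarrow> 'a \<Rightarrow> ('a \<Rightarrow>\<^sub>0 'k::field)) \<Rightarrow> ('a \<Rightarrow>\<^sub>0 'k)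
    \<Rightarrow> ('b \<Rightarrow> 'b \<Rightarrow> ('b \<Rightarrow>\<^sub>0 'k)) \<Rightarrow> ('b \<Rightarrow>\<^sub>0 'k) \<Rightarrow> ('a \<Rightarrow> ('b \<Rightarrow>\<^sub>0 'k)) \<Rightarrow> bool" where
  "alg_map mA uA mB uB f \<longleftrightarrow>
     (\<forall>x y. lin f (bilin mA x y) = bilin mB (lin f x) (lin f y)) \<and> lin f uA = uB"

definition inv_pair :: "('a \<Rightarrow> 'a \<Rightarrow> ('a \<Rightarrow>\<^sub>0 'k::field)) \<Rightarrow> ('a \<Rightarrow>\<^sub>0 'k) \<Rightarrow> ('a \<Rightarrow>\<^sub>0 'k) \<Rightarrow> ('a \<Rightarrow>\<^sub>0 'k) \<Rightarrow> bool" where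
  "inv_pair m u x y \<longleftrightarrow> bilin m x y = u \<and> bilin m y x = u"

text \<open>Quasi-bialgebra (H, m, 1, \<Delta>, \<epsilon>, \<Phi>) with \<Phi>i = \<Phi>^{-1}; H \<otimes> H \<otimes> H is right-nested.\<close>
definition quasi_bialgebra ::
  "('h \<Rightarrow> 'h \<Rightarrow> ('h \<Rightarrow>\<^sub>0 'k::field)) \<Rightarrow> ('h \<Rightarrow>\<^sub>0 'k) \<Rightarrow> ('h \<Rightarrow> ('h \<times> 'h \<Rightarrow>\<^sub>0 'k)) \<Rightarrow> ('h \<Rightarrow> 'k)
   \<Rightarrow> ('h \<times> 'h \<times> 'h \<Rightarrow>\<^sub>0 'k) \<Rightarrow> ('h \<times> 'h \<times> 'h \<Rightarrow>\<^sub>0 'k) \<Rightarrow> bool" where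
  "quasi_bialgebra mH uH D e Phi Phii \<longleftrightarrow>
    (let M3 = tmult mH (tmult mH mH); M4 = tmult mH (tmult mH (tmult mH mH)) in
     assoc_alg mH uH \<and>
     alg_map mH uH (tmult mH mH) (tens uH uH) D \<and>
     (\<forall>x y. lfun e (bilin mH x y) = lfun e x * lfun e y) \<and> lfun e uH = 1 \<and>
     inv_pair M3 (tens uH (tens uH uH)) Phi Phii \<and>
     (\<forall>x. lin (tmap bas D) (lin D x)
          = bilin M3 (bilin M3 Phi (lin reas (lin (tmap D bas) (lin D x)))) Phii) \<and>
     (\<forall>x. lin (epsR e) (lin D x) = x) \<and>
     (\<forall>x. lin (epsL e) (lin D x) = x) \<and>
     bilin M4 (bilin M4 (tens uH Phi) (lin (tmap bas reas) (lin (tmap bas (tmap D bas)) Phi)))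
              (lin (app1 uH) Phi)
       = bilin M4 (lin (tmap bas (tmap bas D)) Phi) (lin reas (lin (tmap D bas) Phi)) \<and>
     lin (epsMid e) Phi = tens uH uH)"

definition bact :: "('h \<Rightarrow> 'a \<Rightarrow> ('a \<Rightarrow>\<^sub>0 'k::field)) \<Rightarrow> ('a \<Rightarrow> 'h \<Rightarrow> ('a \<Rightarrow>\<^sub>0 'k))
    \<Rightarrow> ('h \<Rightarrow>\<^sub>0 'k) \<Rightarrow> ('a \<Rightarrow>\<^sub>0 'k) \<Rightarrow> ('h \<Rightarrow>\<^sub>0 'k) \<Rightarrow> ('a \<Rightarrow>\<^sub>0 'k)" where
  "bact la ra h x h' = bilin ra (bilin la h x) h'"

definition bimodule_algebra ::
  "('h \<Rightarrow> 'h \<Rightarrow> ('h \<Rightarrow>\<^sub>0 'k::field)) \<Rightarrow> ('h \<Rightarrow>\<^sub>0 'k) \<Rightarrow> ('h \<Rightarrow> ('h \<times> 'h \<Rightarrow>\<^sub>0 'k)) \<Rightarrow> ('h \<Rightarrow> 'k)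
   \<Rightarrow> ('h \<times> 'h \<times> 'h \<Rightarrow>\<^sub>0 'k) \<Rightarrow> ('h \<times> 'h \<times> 'h \<Rightarrow>\<^sub>0 'k)
   \<Rightarrow> ('h \<Rightarrow> 'a \<Rightarrow> ('a \<Rightarrow>\<^sub>0 'k)) \<Rightarrow> ('a \<Rightarrow> 'h \<Rightarrow> ('a \<Rightarrow>\<^sub>0 'k))
   \<Rightarrow> ('a \<Rightarrow> 'a \<Rightarrow> ('a \<Rightarrow>\<^sub>0 'k)) \<Rightarrow> ('a \<Rightarrow>\<^sub>0 'k) \<Rightarrow> bool" where
  "bimodule_algebra mH uH D e Phi Phii la ra mA uA \<longleftrightarrow>
     (\<forall>g h x. bilin la g (bilin la h x) = bilin la (bilin mH g h) x) \<and>
     (\<forall>x. bilin la uH x = x) \<and>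
     (\<forall>x g h. bilin ra (bilin ra x g) h = bilin ra x (bilin mH g h)) \<and>
     (\<forall>x. bilin ra x uH = x) \<and>
     (\<forall>g x h. bilin ra (bilin la g x) h = bilin la g (bilin ra x h)) \<and>
     (\<forall>x. bilin mA uA x = x \<and> bilin mA x uA = x) \<and>
     (\<forall>x y z. bilin mA (bilin mA x y) z
        = lin (\<lambda>(X1, X2, X3). lin (\<lambda>(y1, y2, y3).
             bilin mA (bact la ra (bas X1) x (bas y1))
                      (bilin mA (bact la ra (bas X2) y (bas y2)) (bact la ra (bas X3) z (bas y3)))) Phii) Phi) \<and>
     (\<forall>h x y. bilin la h (bilin mA x y)
        = lin (\<lambda>(a, b). bilin mA (bilin la (bas a) x) (bilin la (bas b) y)) (lin D h)) \<and>
     (\<forall>h x y. bilin ra (bilin mA x y) h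
        = lin (\<lambda>(a, b). bilin mA (bilin ra x (bas a)) (bilin ra y (bas b))) (lin D h)) \<and>
     (\<forall>h. bilin la h uA = vsc (lfun e h) uA \<and> bilin ra uA h = vsc (lfun e h) uA)"

definition right_comodule_algebra ::
  "('h \<Rightarrow> 'h \<Rightarrow> ('h \<Rightarrow>\<^sub>0 'k::field)) \<Rightarrow> ('h \<Rightarrow>\<^sub>0 'k) \<Rightarrow> ('h \<Rightarrow> ('h \<times> 'h \<Rightarrow>\<^sub>0 'k)) \<Rightarrow> ('h \<Rightarrow> 'k)
   \<Rightarrow> ('h \<times> 'h \<times> 'h \<Rightarrow>\<^sub>0 'k)
   \<Rightarrow> ('u \<Rightarrow> 'u \<Rightarrow> ('u \<Rightarrow>\<^sub>0 'k)) \<Rightarrow> ('u \<Rightarrow>\<^sub>0 'k) \<Rightarrow> ('u \<Rightarrow> ('u \<times> 'h \<Rightarrow>\<^sub>0 'k))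
   \<Rightarrow> ('u \<times> 'h \<times> 'h \<Rightarrow>\<^sub>0 'k) \<Rightarrow> ('u \<times> 'h \<times> 'h \<Rightarrow>\<^sub>0 'k) \<Rightarrow> bool" where
  "right_comodule_algebra mH uH D e Phi mU uU rho Pr Pri \<longleftrightarrow>
    (let M3 = tmult mU (tmult mH mH); M4 = tmult mU (tmult mH (tmult mH mH)) in
     assoc_alg mU uU \<and>
     alg_map mU uU (tmult mU mH) (tens uU uH) rho \<and>
     inv_pair M3 (tens uU (tens uH uH)) Pr Pri \<and>
     (\<forall>x. bilin M3 Pr (lin reas (lin (tmap rho bas) (lin rho x)))
          = bilin M3 (lin (tmap bas D) (lin rho x)) Pr) \<and>
     bilin M4 (bilin M4 (tens uU Phi) (lin (tmap bas reas) (lin (tmap bas (tmap D bas)) Pr)))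
              (lin (app1 uH) Pr)
       = bilin M4 (lin (tmap bas (tmap bas D)) Pr) (lin reas (lin (tmap rho bas) Pr)) \<and>
     (\<forall>x. lin (epsR e) (lin rho x) = x) \<and>
     lin (epsMid e) Pr = tens uU uH \<and>
     lin (epsLast e) Pr = tens uU uH)"

definition left_comodule_algebra ::
  "('h \<Rightarrow> 'h \<Rightarrow> ('h \<Rightarrow>\<^sub>0 'k::field)) \<Rightarrow> ('h \<Rightarrow>\<^sub>0 'k) \<Rightarrow> ('h \<Rightarrow> ('h \<times> 'h \<Rightarrow>\<^sub>0 'k)) \<Rightarrow> ('h \<Rightarrow> 'k)
   \<Rightarrow> ('h \<times> 'h \<times> 'h \<Rightarrow>\<^sub>0 'k)
   \<Rightarrow> ('u \<Rightarrow> 'u \<Rightarrow> ('u \<Rightarrow>\<^sub>0 'k)) \<Rightarrow> ('u \<Rightarrow>\<^sub>0 'k) \<Rightarrow> ('u \<Rightarrow> ('h \<times> 'u \<Rightarrow>\<^sub>0 'k))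
   \<Rightarrow> ('h \<times> 'h \<times> 'u \<Rightarrow>\<^sub>0 'k) \<Rightarrow> ('h \<times> 'h \<times> 'u \<Rightarrow>\<^sub>0 'k) \<Rightarrow> bool" where
  "left_comodule_algebra mH uH D e Phi mU uU lam Pl Pli \<longleftrightarrow>
    (let M3 = tmult mH (tmult mH mU); M4 = tmult mH (tmult mH (tmult mH mU)) in
     assoc_alg mU uU \<and>
     alg_map mU uU (tmult mH mU) (tens uH uU) lam \<and>
     inv_pair M3 (tens uH (tens uH uU)) Pl Pli \<and>
     (\<forall>x. bilin M3 (lin (tmap bas lam) (lin lam x)) Pl
          = bilin M3 Pl (lin reas (lin (tmap D bas) (lin lam x)))) \<and>
     bilin M4 (bilin M4 (tens uH Pl) (lin (tmap bas reas) (lin (tmap bas (tmap D bas)) Pl)))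
              (lin (app1 uU) Phi)
       = bilin M4 (lin (tmap bas (tmap bas lam)) Pl) (lin reas (lin (tmap D bas) Pl)) \<and>
     (\<forall>x. lin (epsL e) (lin lam x) = x) \<and>
     lin (epsMid e) Pl = tens uH uU \<and>
     lin (epsFirst e) Pl = tens uH uU)"

definition bicomodule_algebra ::
  "('h \<Rightarrow> 'h \<Rightarrow> ('h \<Rightarrow>\<^sub>0 'k::field)) \<Rightarrow> ('h \<Rightarrow>\<^sub>0 'k) \<Rightarrow> ('h \<Rightarrow> ('h \<times> 'h \<Rightarrow>\<^sub>0 'k)) \<Rightarrow> ('h \<Rightarrow> 'k)
   \<Rightarrow> ('h \<times> 'h \<times> 'h \<Rightarrow>\<^sub>0 'k)
   \<Rightarrow> ('u \<Rightarrow> 'u \<Rightarrow> ('u \<Rightarrow>\<^sub>0 'k)) \<Rightarrow> ('u \<Rightarrow>\<^sub>0 'k)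
   \<Rightarrow> ('u \<Rightarrow> ('h \<times> 'u \<Rightarrow>\<^sub>0 'k)) \<Rightarrow> ('u \<Rightarrow> ('u \<times> 'h \<Rightarrow>\<^sub>0 'k))
   \<Rightarrow> ('h \<times> 'h \<times> 'u \<Rightarrow>\<^sub>0 'k) \<Rightarrow> ('h \<times> 'h \<times> 'u \<Rightarrow>\<^sub>0 'k)
   \<Rightarrow> ('u \<times> 'h \<times> 'h \<Rightarrow>\<^sub>0 'k) \<Rightarrow> ('u \<times> 'h \<times> 'h \<Rightarrow>\<^sub>0 'k)
   \<Rightarrow> ('h \<times> 'u \<times> 'h \<Rightarrow>\<^sub>0 'k) \<Rightarrow> ('h \<times> 'u \<times> 'h \<Rightarrow>\<^sub>0 'k) \<Rightarrow> bool" where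
  "bicomodule_algebra mH uH D e Phi mU uU lam rho Pl Pli Pr Pri Plr Plri \<longleftrightarrow>
    (let M3 = tmult mH (tmult mU mH);
         M4 = tmult mH (tmult mH (tmult mU mH));
         N4 = tmult mH (tmult mU (tmult mH mH)) in
     left_comodule_algebra mH uH D e Phi mU uU lam Pl Pli \<and>
     right_comodule_algebra mH uH D e Phi mU uU rho Pr Pri \<and>
     inv_pair M3 (tens uH (tens uU uH)) Plr Plri \<and>
     (\<forall>x. bilin M3 Plr (lin reas (lin (tmap lam bas) (lin rho x)))
          = bilin M3 (lin (tmap bas rho) (lin lam x)) Plr) \<and>
     bilin M4 (bilin M4 (tens uH Plr) (lin (tmap bas reas) (lin (tmap bas (tmap lam bas)) Plr)))
              (lin (app1 uH) Pl)
       = bilin M4 (lin (tmap bas (tmap bas rho)) Pl) (lin reas (lin (tmap D bas) Plr)) \<and>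
     bilin N4 (bilin N4 (tens uH Pr) (lin (tmap bas reas) (lin (tmap bas (tmap rho bas)) Plr)))
              (lin (app1 uH) Plr)
       = bilin N4 (lin (tmap bas (tmap bas D)) Plr) (lin reas (lin (tmap lam bas) Pr)))"

text \<open>The L-R-smash product on basis vectors (f, u), (g, v) of A \<otimes> U:
  (f \<natural> u)(g \<natural> v) = (x\<lambda>1 . f . \<theta>3 v<1> x\<rho>2)(x\<lambda>2 u[-1] \<theta>1 . g . x\<rho>3) \<natural> x\<lambda>3 u[0] \<theta>2 v<0> x\<rho>1,
  where Pli = \<Phi>_\<lambda>^{-1}, Plri = \<Phi>_{\<lambda>,\<rho>}^{-1}, Pri = \<Phi>_\<rho>^{-1}.\<close>
definition smash_mult ::
  "('h \<Rightarrow> 'h \<Rightarrow> ('h \<Rightarrow>\<^sub>0 'k::field)) \<Rightarrow> ('u \<Rightarrow> 'u \<Rightarrow> ('u \<Rightarrow>\<^sub>0 'k))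
   \<Rightarrow> ('h \<Rightarrow> 'a \<Rightarrow> ('a \<Rightarrow>\<^sub>0 'k)) \<Rightarrow> ('a \<Rightarrow> 'h \<Rightarrow> ('a \<Rightarrow>\<^sub>0 'k)) \<Rightarrow> ('a \<Rightarrow> 'a \<Rightarrow> ('a \<Rightarrow>\<^sub>0 'k))
   \<Rightarrow> ('u \<Rightarrow> ('h \<times> 'u \<Rightarrow>\<^sub>0 'k)) \<Rightarrow> ('u \<Rightarrow> ('u \<times> 'h \<Rightarrow>\<^sub>0 'k))
   \<Rightarrow> ('h \<times> 'h \<times> 'u \<Rightarrow>\<^sub>0 'k) \<Rightarrow> ('h \<times> 'u \<times> 'h \<Rightarrow>\<^sub>0 'k) \<Rightarrow> ('u \<times> 'h \<times> 'h \<Rightarrow>\<^sub>0 'k)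
   \<Rightarrow> 'a \<times> 'u \<Rightarrow> 'a \<times> 'u \<Rightarrow> ('a \<times> 'u \<Rightarrow>\<^sub>0 'k)" where
  "smash_mult mH mU la ra mA lam rho Pli Plri Pri = (\<lambda>(f, u) (g, v).
     lin (\<lambda>(l1, l2, l3). lin (\<lambda>(t1, t2, t3). lin (\<lambda>(r1, r2, r3).
       lin (\<lambda>(p, q). lin (\<lambda>(s, w).
         tens (bilin mA (bact la ra (bas l1) (bas f) (bilin mH (bilin mH (bas t3) (bas w)) (bas r2)))
                        (bact la ra (bilin mH (bilin mH (bas l2) (bas p)) (bas t1)) (bas g) (bas r3)))
              (bilin mU (bilin mU (bilin mU (bilin mU (bas l3) (bas q)) (bas t2)) (bas s)) (bas r1))
       ) (rho v)) (lam u)) Pri) Plri) Pli)"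

end

theory Submission
  imports Defs
begin


lemma lookup_map0: "f 0 = 0 \<Longrightarrow> Poly_Mapping.lookup (Poly_Mapping.map f p) k = f (Poly_Mapping.lookup p k)"
  by (simp add: Poly_Mapping.map.rep_eq when_def)

lemma lookup_vsc[simp]: "Poly_Mapping.lookup (vsc c x) i = c * Poly_Mapping.lookup x i"
  unfolding vsc_def by (simp add: lookup_map0)

lemma vsc_add[simp]: "vsc c (x + y) = vsc c x + vsc c y"
  by (rule poly_mapping_eqI) (simp add: lookup_add distrib_left)
lemma vsc_add2: "vsc (c + d) x = vsc c x + vsc d x"
  by (rule poly_mapping_eqI) (simp add: lookup_add distrib_right)
lemma vsc_vsc[simp]: "vsc c (vsc d x) = vsc (c * d) x"
  by (rule poly_mapping_eqI) (simp add: mult.assoc)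
lemma vsc_one[simp]: "vsc 1 x = x"
  by (rule poly_mapping_eqI) simp
lemma vsc_zero[simp]: "vsc 0 x = 0"
  by (rule poly_mapping_eqI) simp
lemma vsc_zero2[simp]: "vsc c 0 = 0"
  by (rule poly_mapping_eqI) simp
lemma vsc_sum: "vsc c (sum f A) = (\<Sum>i\<in>A. vsc c (f i))"
  by (induction A rule: infinite_finite_induct) auto
lemma vsc_single: "vsc c (Poly_Mapping.single i d) = Poly_Mapping.single i (c * d)"
  by (rule poly_mapping_eqI) (simp add: lookup_single when_def)
lemma lookup_bas: "Poly_Mapping.lookup (bas i) j = (if i = j then 1 else 0)"
  by (simp add: bas_def lookup_single)

lemma lin_superset:
  assumes "finite S" "Poly_Mapping.keys x \<subseteq> S"
  shows "lin f x = (\<Sum>i\<in>S. vsc (Poly_Mapping.lookup x i) (f i))"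
proof -
  have "(\<Sum>i\<in>S. vsc (Poly_Mapping.lookup x i) (f i)) = (\<Sum>i\<in>Poly_Mapping.keys x. vsc (Poly_Mapping.lookup x i) (f i))"
    using assms by (intro sum.mono_neutral_right) (auto simp: in_keys_iff)
  then show ?thesis by (simp add: lin_def)
qed

lemma lin_add[simp]: "lin f (x + y) = lin f x + lin f y"
proof -
  let ?S = "Poly_Mapping.keys x \<union> Poly_Mapping.keys y"
  have "Poly_Mapping.keys (x+y) \<subseteq> ?S" by (rule Poly_Mapping.keys_add)
  then have "lin f (x+y) = (\<Sum>i\<in>?S. vsc (Poly_Mapping.lookup (x+y) i) (f i))" by (intro lin_superset) auto
  also have "\<dots> = (\<Sum>i\<in>?S. vsc (Poly_Mapping.lookup x i) (f i)) + (\<Sum>i\<in>?S. vsc (Poly_Mapping.lookup y i) (f i))"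
    by (simp add: lookup_add vsc_add2 sum.distrib)
  also have "\<dots> = lin f x + lin f y" by (subst (1 2) lin_superset[where S="?S"]) auto
  finally show ?thesis .
qed

lemma keys_vsc: "Poly_Mapping.keys (vsc c x) \<subseteq> Poly_Mapping.keys x"
  by (auto simp: in_keys_iff)

lemma lin_vsc[simp]: "lin f (vsc c x) = vsc c (lin f x)"
proof -
  have "lin f (vsc c x) = (\<Sum>i\<in>Poly_Mapping.keys x. vsc (Poly_Mapping.lookup (vsc c x) i) (f i))"
    by (intro lin_superset keys_vsc) auto
  also have "\<dots> = vsc c (lin f x)" by (simp add: lin_def vsc_sum)
  finally show ?thesis .
qed

lemma lin_zero[simp]: "lin f 0 = 0"
  by (simp add: lin_def)

lemma lin_single: "lin f (Poly_Mapping.single i c) = vsc c (f i)"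
proof (cases "c = 0")
  case True then show ?thesis by simp
next
  case False then show ?thesis by (simp add: lin_def)
qed

lemma lin_bas[simp]: "lin f (bas i) = f i"
  by (simp add: bas_def lin_single)

lemma lin_fadd: "lin (\<lambda>i. f i + g i) x = lin f x + lin g x"
  by (simp add: lin_def sum.distrib)
lemma lin_fvsc: "lin (\<lambda>i. vsc c (f i)) x = vsc c (lin f x)"
  by (simp add: lin_def vsc_sum mult.commute)
lemma lin_fzero[simp]: "lin (\<lambda>i. 0) x = 0"
  by (simp add: lin_def)

definition lf :: "(('a \<Rightarrow>\<^sub>0 'k::field) \<Rightarrow> ('b \<Rightarrow>\<^sub>0 'k)) \<Rightarrow> bool" where
  "lf L \<longleftrightarrow> (\<forall>x y. L (x + y) = L x + L y) \<and> (\<forall>c x. L (vsc c x) = vsc c (L x))"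

lemma lfD1: "lf L \<Longrightarrow> L (x + y) = L x + L y" by (simp add: lf_def)
lemma lfD2: "lf L \<Longrightarrow> L (vsc c x) = vsc c (L x)" by (simp add: lf_def)
lemma lf_zero: "lf L \<Longrightarrow> L 0 = 0"
  using lfD2[of L 0 0] by simp
lemma lf_sum: "lf L \<Longrightarrow> L (sum f A) = (\<Sum>i\<in>A. L (f i))"
  by (induction A rule: infinite_finite_induct) (auto simp: lf_zero lfD1)

lemma lf_lin_expand: "lf L \<Longrightarrow> L x = lin (\<lambda>i. L (bas i)) x"
proof -
  assume L: "lf L"
  have "x = (\<Sum>i\<in>Poly_Mapping.keys x. vsc (Poly_Mapping.lookup x i) (bas i))"
  proof (rule poly_mapping_eqI)
    fix k
    show "Poly_Mapping.lookup x k = Poly_Mapping.lookup (\<Sum>i\<in>Poly_Mapping.keys x. vsc (Poly_Mapping.lookup x i) (bas i)) k"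
      by (simp add: lookup_sum lookup_bas in_keys_iff)
         (simp add: if_distrib[of "\<lambda>t. _ * t"] sum.delta' in_keys_iff cong: if_cong)
  qed
  then have "L x = L (\<Sum>i\<in>Poly_Mapping.keys x. vsc (Poly_Mapping.lookup x i) (bas i))" by simp
  also have "\<dots> = lin (\<lambda>i. L (bas i)) x" using L by (simp add: lf_sum lfD2 lin_def)
  finally show ?thesis .
qed

lemma lin_basis_eq: "lf L \<Longrightarrow> lin (\<lambda>i. L (bas i)) x = L x"
  by (simp add: lf_lin_expand[symmetric])

lemma lf_lin[simp]: "lf (lin f)"
  by (simp add: lf_def)

lemma lin_lin: "lin g (lin f x) = lin (\<lambda>i. lin g (f i)) x"
  by (subst lf_lin_expand[of "\<lambda>x. lin g (lin f x)"]) (simp_all add: lf_def)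

lemma lf_linfun: "(\<And>i. lf (G i)) \<Longrightarrow> lf (\<lambda>x. lin (\<lambda>i. G i x) y)"
  unfolding lf_def by (simp add: lfD1 lfD2 lin_fadd lin_fvsc cong: lf_def)

lemma lin_swap: "lin (\<lambda>i. lin (\<lambda>j. K i j) y) x = lin (\<lambda>j. lin (\<lambda>i. K i j) x) y"
proof -
  have "lf (\<lambda>x. lin (\<lambda>j. lin (\<lambda>i. K i j) x) y)"
    by (rule lf_linfun) simp
  then have "lin (\<lambda>j. lin (\<lambda>i. K i j) x) y = lin (\<lambda>i. lin (\<lambda>j. lin (\<lambda>i. K i j) (bas i)) y) x"
    by (rule lf_lin_expand)
  then show ?thesis by simp
qed

lemma lin_bas_id[simp]: "lin bas x = x"
  using lin_basis_eq[of "\<lambda>x. x" x] by (simp add: lf_def)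

lemma bilin_lin: "bilin m x y = lin (\<lambda>i. lin (\<lambda>j. m i j) y) x"
  by (simp add: bilin_def lin_def vsc_sum)

lemma tens_bilin: "tens x y = bilin (\<lambda>i j. bas (i, j)) x y"
  by (simp add: tens_def bilin_def bas_def vsc_single)


lemma lf_id[simp]: "lf (\<lambda>x. x)" by (simp add: lf_def)
lemma lf_lin_comp[simp]: "lf g \<Longrightarrow> lf (\<lambda>x. lin f (g x))" unfolding lf_def by (simp add: lfD1[of g] lfD2[of g])
lemma lf_vsc[simp]: "lf g \<Longrightarrow> lf (\<lambda>x. vsc c (g x))"
  unfolding lf_def by (simp add: lfD1[of g] lfD2[of g] mult.commute)

lemma bilin_linR: "bilin m x y = lin (\<lambda>i. lin (\<lambda>j. m i j) y) x" by (rule bilin_lin)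

lemma bilin_add1[simp]: "bilin m (x + x') y = bilin m x y + bilin m x' y" by (simp add: bilin_lin)
lemma bilin_vsc1[simp]: "bilin m (vsc c x) y = vsc c (bilin m x y)" by (simp add: bilin_lin)
lemma bilin_add2[simp]: "bilin m x (y + y') = bilin m x y + bilin m x y'"
  by (simp add: bilin_lin lin_fadd)
lemma bilin_vsc2[simp]: "bilin m x (vsc c y) = vsc c (bilin m x y)"
  by (simp add: bilin_lin lin_fvsc)
lemma bilin_zero1[simp]: "bilin m 0 y = 0" by (simp add: bilin_lin)
lemma bilin_zero2[simp]: "bilin m x 0 = 0" by (simp add: bilin_lin)
lemma bilin_bas[simp]: "bilin m (bas i) (bas j) = m i j" by (simp add: bilin_lin)

lemma lf_bilin1[simp]: "lf g \<Longrightarrow> lf (\<lambda>x. bilin m (g x) y)" unfolding lf_def by (simp add: lfD1[of g] lfD2[of g])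
lemma lf_bilin2[simp]: "lf g \<Longrightarrow> lf (\<lambda>x. bilin m y (g x))" unfolding lf_def by (simp add: lfD1[of g] lfD2[of g])

lemma tens_add1[simp]: "tens (x + x') y = tens x y + tens x' y" by (simp add: tens_bilin)
lemma tens_vsc1[simp]: "tens (vsc c x) y = vsc c (tens x y)" by (simp add: tens_bilin)
lemma tens_add2[simp]: "tens x (y + y') = tens x y + tens x y'" by (simp add: tens_bilin)
lemma tens_vsc2[simp]: "tens x (vsc c y) = vsc c (tens x y)" by (simp add: tens_bilin)
lemma tens_zero1[simp]: "tens 0 y = 0" by (simp add: tens_bilin)
lemma tens_zero2[simp]: "tens x 0 = 0" by (simp add: tens_bilin)
lemma tens_bas[simp]: "tens (bas i) (bas j) = bas (i, j)" by (simp add: tens_bilin)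

lemma lf_tens1[simp]: "lf g \<Longrightarrow> lf (\<lambda>x. tens (g x) y)" unfolding lf_def by (simp add: lfD1[of g] lfD2[of g])
lemma lf_tens2[simp]: "lf g \<Longrightarrow> lf (\<lambda>x. tens y (g x))" unfolding lf_def by (simp add: lfD1[of g] lfD2[of g])

lemma lf_linfun2[simp]: "(\<And>i. lf (\<lambda>x. G i x)) \<Longrightarrow> lf (\<lambda>x. lin (\<lambda>i. G i x) y)"
  using lf_linfun[of G y] by simp

lemma lf_case_prod[simp]: "(\<And>a b. lf (\<lambda>x. G a b x)) \<Longrightarrow> lf (\<lambda>x. case p of (a, b) \<Rightarrow> G a b x)"
  by (cases p) simp

lemma lin_push: "lf L \<Longrightarrow> L (lin f x) = lin (\<lambda>i. L (f i)) x"
proof -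
  assume L: "lf L"
  have "lf (\<lambda>x. L (lin f x))" using L unfolding lf_def by simp
  then show ?thesis by (subst lf_lin_expand[of "\<lambda>x. L (lin f x)"]) simp_all
qed

section \<open>Sweedler sums\<close>

definition sw :: "('a \<times> 'b \<Rightarrow>\<^sub>0 'k::field) \<Rightarrow> (('a \<Rightarrow>\<^sub>0 'k) \<Rightarrow> ('b \<Rightarrow>\<^sub>0 'k) \<Rightarrow> ('c \<Rightarrow>\<^sub>0 'k)) \<Rightarrow> ('c \<Rightarrow>\<^sub>0 'k)" where
  "sw T F = lin (\<lambda>(a, b). F (bas a) (bas b)) T"

lemma lf_sw_fun[simp]: "(\<And>a b. lf (\<lambda>x. G a b x)) \<Longrightarrow> lf (\<lambda>x. sw T (\<lambda>a b. G a b x))"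
  unfolding sw_def by (rule lf_linfun2) simp
lemma lf_sw_arg[simp]: "lf g \<Longrightarrow> lf (\<lambda>x. sw (g x) F)"
  unfolding sw_def by simp

lemma sw_bas[simp]: "sw (bas (i, j)) F = F (bas i) (bas j)" by (simp add: sw_def)
lemma sw_add[simp]: "sw (x + y) F = sw x F + sw y F" by (simp add: sw_def)
lemma sw_vsc[simp]: "sw (vsc c x) F = vsc c (sw x F)" by (simp add: sw_def)
lemma sw_zero[simp]: "sw 0 F = 0" by (simp add: sw_def)

lemma lin_tens: "lin G (tens x y) = lin (\<lambda>i. lin (\<lambda>j. G (i, j)) y) x"
  by (simp add: tens_bilin bilin_lin lin_lin)

lemma sw_tens[simp]:
  assumes "\<And>b. lf (\<lambda>a. F a b)" "\<And>a. lf (\<lambda>b. F a b)"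
  shows "sw (tens x y) F = F x y"
proof -
  have "sw (tens x y) F = lin (\<lambda>i. lin (\<lambda>j. F (bas i) (bas j)) y) x"
    by (simp add: sw_def lin_tens)
  also have "\<dots> = lin (\<lambda>i. F (bas i) y) x"
    using lin_basis_eq[OF assms(2)] by simp
  also have "\<dots> = F x y" using lin_basis_eq[OF assms(1)] by simp
  finally show ?thesis .
qed

lemma sw_tens_bas1[simp]: "lf (F (bas i)) \<Longrightarrow> sw (tens (bas i) y) F = F (bas i) y"
  by (simp add: sw_def lin_tens lin_basis_eq)
lemma sw_tens_bas2[simp]: "lf (\<lambda>a. F a (bas j)) \<Longrightarrow> sw (tens x (bas j)) F = F x (bas j)"
  by (simp add: sw_def lin_tens lin_basis_eq[of "\<lambda>a. F a (bas j)"])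

lemma sw_push: "lf L \<Longrightarrow> L (sw T F) = sw T (\<lambda>a b. L (F a b))"
  unfolding sw_def by (simp add: lin_push[of L] prod.case_distrib)

lemma sw_swap: "sw T (\<lambda>a b. sw S (\<lambda>c d. K a b c d)) = sw S (\<lambda>c d. sw T (\<lambda>a b. K a b c d))"
  unfolding sw_def case_prod_unfold by (rule lin_swap)

lemma sw_fadd: "sw T (\<lambda>a b. F a b + G a b) = sw T F + sw T G"
  unfolding sw_def case_prod_unfold by (rule lin_fadd)
lemma sw_fvsc: "sw T (\<lambda>a b. vsc c (F a b)) = vsc c (sw T F)"
  unfolding sw_def case_prod_unfold by (rule lin_fvsc)

lemma tmult_bas[simp]: "tmult m n (a, b) (c, d) = tens (m a c) (n b d)"
  by (simp add: tmult_def)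

lemma tens_lin1: "tens (lin f x) y = lin (\<lambda>i. tens (f i) y) x"
  by (rule lin_push) simp
lemma tens_lin2: "tens x (lin f y) = lin (\<lambda>i. tens x (f i)) y"
  by (rule lin_push[of "\<lambda>v. tens x v"]) simp

lemma tmult_tens[simp]: "bilin (tmult m n) (tens x y) (tens x' y') = tens (bilin m x x') (bilin n y y')"
proof -
  have "bilin (tmult m n) (tens x y) (tens x' y') =
     lin (\<lambda>i. lin (\<lambda>j. lin (\<lambda>k. lin (\<lambda>l. tens (m i k) (n j l)) y') x') y) x"
    unfolding bilin_lin lin_tens by simp
  also have "\<dots> = lin (\<lambda>i. lin (\<lambda>k. lin (\<lambda>j. lin (\<lambda>l. tens (m i k) (n j l)) y') y) x') x"
    by (simp only: lin_swap[of _ x' y])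
  also have "\<dots> = tens (bilin m x x') (bilin n y y')"
    by (simp only: bilin_lin tens_lin1, simp only: tens_lin2)
  finally show ?thesis .
qed


lemma eq_basis1: "lf F \<Longrightarrow> lf G \<Longrightarrow> (\<And>i. F (bas i) = G (bas i)) \<Longrightarrow> F x = G x"
proof -
  assume F: "lf F" and G: "lf G" and e: "\<And>i. F (bas i) = G (bas i)"
  have "F x = lin (\<lambda>i. F (bas i)) x" by (rule lf_lin_expand[OF F])
  also have "\<dots> = lin (\<lambda>i. G (bas i)) x" using e by simp
  also have "\<dots> = G x" by (rule lf_lin_expand[OF G, symmetric])
  finally show ?thesis .
qed

lemma eq_basis2:
  assumes "\<And>y. lf (\<lambda>x. F x y)" "\<And>x. lf (\<lambda>y. F x y)" "\<And>y. lf (\<lambda>x. G x y)" "\<And>x. lf (\<lambda>y. G x y)"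
    "\<And>i j. F (bas i) (bas j) = G (bas i) (bas j)"
  shows "F x y = G x y"
proof -
  have 1: "F (bas i) y = G (bas i) y" for i
    using eq_basis1[of "\<lambda>y. F (bas i) y" "\<lambda>y. G (bas i) y" y] assms(2,4,5) by blast
  show ?thesis
    using eq_basis1[of "\<lambda>x. F x y" "\<lambda>x. G x y" x] assms(1,3) 1 by blast
qed

lemma eq_basis3:
  assumes "\<And>y z. lf (\<lambda>x. F x y z)" "\<And>x z. lf (\<lambda>y. F x y z)" "\<And>x y. lf (\<lambda>z. F x y z)"
    "\<And>y z. lf (\<lambda>x. G x y z)" "\<And>x z. lf (\<lambda>y. G x y z)" "\<And>x y. lf (\<lambda>z. G x y z)"
    "\<And>i j k. F (bas i) (bas j) (bas k) = G (bas i) (bas j) (bas k)"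
  shows "F x y z = G x y z"
proof -
  have 1: "F (bas i) y z = G (bas i) y z" for i
    using eq_basis2[of "\<lambda>y z. F (bas i) y z" "\<lambda>y z. G (bas i) y z" y z] assms(2,3,5,6,7) by blast
  show ?thesis
    using eq_basis1[of "\<lambda>x. F x y z" "\<lambda>x. G x y z" x] assms(1,4) 1 by blast
qed

lemma eq_basis_p2:
  assumes "lf F" "lf G" "\<And>a b. F (bas (a, b)) = G (bas (a, b))" shows "F x = G x"
proof (rule eq_basis1[OF assms(1,2)])
  fix i show "F (bas i) = G (bas i)" using assms(3)[of "fst i" "snd i"] by simp
qed
lemma eq_basis_p3l:
  assumes "lf F" "lf G" "\<And>a b c. F (bas ((a, b), c)) = G (bas ((a, b), c))" shows "F x = G x"
proof (rule eq_basis1[OF assms(1,2)])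
  fix i show "F (bas i) = G (bas i)" using assms(3)[of "fst (fst i)" "snd (fst i)" "snd i"] by simp
qed
lemma eq_basis_p3r:
  assumes "lf F" "lf G" "\<And>a b c. F (bas (a, b, c)) = G (bas (a, b, c))" shows "F x = G x"
proof (rule eq_basis1[OF assms(1,2)])
  fix i show "F (bas i) = G (bas i)" using assms(3)[of "fst i" "fst (snd i)" "snd (snd i)"] by simp
qed
lemma eq_basis_p4r:
  assumes "lf F" "lf G" "\<And>a b c d. F (bas (a, b, c, d)) = G (bas (a, b, c, d))" shows "F x = G x"
proof (rule eq_basis1[OF assms(1,2)])
  fix i show "F (bas i) = G (bas i)"
    using assms(3)[of "fst i" "fst (snd i)" "fst (snd (snd i))" "snd (snd (snd i))"] by simp
qed

lemma lf_bilin_push1: "bilin m (lin f x) y = lin (\<lambda>i. bilin m (f i) y) x"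
  by (rule lin_push) simp

lemma sw_prod[simp]:
  assumes "\<And>b. lf (\<lambda>a. F a b)" "\<And>a. lf (\<lambda>b. F a b)"
  shows "sw (bilin (tmult m n) X Y) F = sw X (\<lambda>a b. sw Y (\<lambda>c d. F (bilin m a c) (bilin n b d)))"
proof -
  have "sw (bilin (tmult m n) X Y) F = lin (\<lambda>p. lin (\<lambda>q. sw (tmult m n p q) F) Y) X"
    unfolding bilin_lin sw_def lin_lin ..
  also have "\<dots> = lin (\<lambda>p. lin (\<lambda>q. F (m (fst p) (fst q)) (n (snd p) (snd q))) Y) X"
    by (simp add: tmult_def case_prod_unfold assms)
  also have "\<dots> = sw X (\<lambda>a b. sw Y (\<lambda>c d. F (bilin m a c) (bilin n b d)))"
    by (simp add: sw_def case_prod_unfold)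
  finally show ?thesis .
qed

lemma sw_def2: "sw T F = lin (\<lambda>p. F (bas (fst p)) (bas (snd p))) T"
  by (simp add: sw_def case_prod_unfold)

lemma sw_tmap[simp]:
  assumes "\<And>b. lf (\<lambda>a. F a b)" "\<And>a. lf (\<lambda>b. F a b)"
  shows "sw (lin (tmap f g) X) F = sw X (\<lambda>a b. F (lin f a) (lin g b))"
proof -
  have "sw (lin (tmap f g) X) F = lin (\<lambda>p. sw (tens (f (fst p)) (g (snd p))) F) X"
    unfolding sw_def2 lin_lin by (simp add: tmap_def case_prod_unfold)
  also have "\<dots> = sw X (\<lambda>a b. F (lin f a) (lin g b))"
    by (simp add: assms, simp add: sw_def2)
  finally show ?thesis .
qed

abbreviation sw3 where "sw3 T F \<equiv> sw T (\<lambda>a y. sw y (\<lambda>b c. F a b c))"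
abbreviation sw4 where "sw4 T F \<equiv> sw T (\<lambda>a y. sw3 y (\<lambda>b c d. F a b c d))"

lemma reas_bas[simp]: "reas ((a, b), c) = bas (a, b, c)" by (simp add: reas_def)

lemma sw_reas[simp]: "sw (lin reas Y) F = sw Y (\<lambda>ab c. sw ab (\<lambda>a b. F a (tens b c)))"
  by (rule eq_basis_p3l) simp_all

lemma app1_bas[simp]: "app1 e (a, b, c) = tens (bas a) (tens (bas b) (tens (bas c) e))"
  by (simp add: app1_def)

lemma sw_app1[simp]:
  assumes "\<And>a b c. lf (\<lambda>d. F a b c d)"
  shows "sw4 (lin (app1 e) X) F = sw3 X (\<lambda>a b c. F a b c e)"
  by (rule eq_basis_p3r) (simp_all add: assms)

lemma tmult_bas_bas: "bilin (tmult m n) (bas (a, b)) (bas (c, d)) = tens (m a c) (n b d)"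
  by simp
lemma tmult_tens_bas: "bilin (tmult m n) (tens x y) (bas (c, d)) = tens (bilin m x (bas c)) (bilin n y (bas d))"
  using tmult_tens[of m n x y "bas c" "bas d"] by simp
lemma tmult_bas_tens: "bilin (tmult m n) (bas (c, d)) (tens x y) = tens (bilin m (bas c) x) (bilin n (bas d) y)"
  using tmult_tens[of m n "bas c" "bas d" x y] by simp

lemma assoc_alg_tmult:
  assumes "assoc_alg m u" "assoc_alg n v"
  shows "assoc_alg (tmult m n) (tens u v)"
  unfolding assoc_alg_def
proof (intro allI conjI)
  have am: "\<And>x y z. bilin m (bilin m x y) z = bilin m x (bilin m y z)" "\<And>x. bilin m u x = x" "\<And>x. bilin m x u = x"
    using assms(1) unfolding assoc_alg_def by auto
  have an: "\<And>x y z. bilin n (bilin n x y) z = bilin n x (bilin n y z)" "\<And>x. bilin n v x = x" "\<And>x. bilin n x v = x"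
    using assms(2) unfolding assoc_alg_def by auto
  fix x y z
  show "bilin (tmult m n) (bilin (tmult m n) x y) z = bilin (tmult m n) x (bilin (tmult m n) y z)"
  proof (rule eq_basis3[where F="\<lambda>x y z. bilin (tmult m n) (bilin (tmult m n) x y) z"])
    fix i j k
    show "bilin (tmult m n) (bilin (tmult m n) (bas i) (bas j)) (bas k) =
          bilin (tmult m n) (bas i) (bilin (tmult m n) (bas j) (bas k))"
      using am(1)[of "bas (fst i)" "bas (fst j)" "bas (fst k)"] an(1)[of "bas (snd i)" "bas (snd j)" "bas (snd k)"]
        tmult_bas_bas[of m n "fst i" "snd i" "fst j" "snd j"] tmult_bas_bas[of m n "fst j" "snd j" "fst k" "snd k"]
        tmult_tens_bas[of m n _ _ "fst k" "snd k"] tmult_bas_tens[of m n "fst i" "snd i"]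
      by (simp del: tmult_bas bilin_bas tmult_tens) (simp)
  qed simp_all
  show "bilin (tmult m n) (tens u v) x = x"
  proof (rule eq_basis1[where F="\<lambda>x. bilin (tmult m n) (tens u v) x"])
    fix i
    show "bilin (tmult m n) (tens u v) (bas i) = bas i"
      using tmult_tens_bas[of m n u v "fst i" "snd i"] am an by simp
  qed simp_all
  show "bilin (tmult m n) x (tens u v) = x"
  proof (rule eq_basis1[where F="\<lambda>x. bilin (tmult m n) x (tens u v)"])
    fix i
    show "bilin (tmult m n) (bas i) (tens u v) = bas i"
      using tmult_bas_tens[of m n "fst i" "snd i" u v] am an by simp
  qed simp_all
qed


definition mulmap :: "('a \<Rightarrow> ('b \<Rightarrow>\<^sub>0 'k::field)) \<Rightarrow> ('a \<Rightarrow> 'a \<Rightarrow> ('a \<Rightarrow>\<^sub>0 'k)) \<Rightarrow> ('b \<Rightarrow> 'b \<Rightarrow> ('b \<Rightarrow>\<^sub>0 'k)) \<Rightarrow> bool" where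
  "mulmap f m m' \<longleftrightarrow> (\<forall>x y. lin f (bilin m x y) = bilin m' (lin f x) (lin f y))"

lemma mulmapD: "mulmap f m m' \<Longrightarrow> lin f (bilin m x y) = bilin m' (lin f x) (lin f y)"
  by (simp add: mulmap_def)

lemma mulmap_bas: "mulmap f m m' \<longleftrightarrow> (\<forall>i j. lin f (m i j) = bilin m' (f i) (f j))"
proof
  assume "mulmap f m m'" then show "\<forall>i j. lin f (m i j) = bilin m' (f i) (f j)"
    using mulmapD[of f m m' "bas i" "bas j" for i j] by simp
next
  assume h: "\<forall>i j. lin f (m i j) = bilin m' (f i) (f j)"
  show "mulmap f m m'" unfolding mulmap_def
  proof (intro allI)
    fix x y
    show "lin f (bilin m x y) = bilin m' (lin f x) (lin f y)"
      by (rule eq_basis2[where F="\<lambda>x y. lin f (bilin m x y)"]) (simp_all add: h)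
  qed
qed

lemma tmap_pair[simp]: "tmap f g (a, b) = tens (f a) (g b)" by (simp add: tmap_def)

lemma lin_tmap_tens[simp]: "lin (tmap f g) (tens x y) = tens (lin f x) (lin g y)"
proof -
  have "lin (tmap f g) (tens x y) = sw (tens x y) (\<lambda>a b. tens (lin f a) (lin g b))"
    unfolding sw_def tmap_def by (simp add: case_prod_unfold)
  then show ?thesis by simp
qed

lemma lin_tmap_bas[simp]: "lin (tmap f g) (bas (a, b)) = tens (f a) (g b)"
  by (simp add: tmap_def)

lemma mulmap_tmap:
  assumes "mulmap f m m'" "mulmap g n n'"
  shows "mulmap (tmap f g) (tmult m n) (tmult m' n')"
  using assms unfolding mulmap_bas split_paired_All by (simp add: tmap_pair)

lemma mulmap_id: "mulmap bas m m"
  by (simp add: mulmap_def)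

lemma sw_tens_id: "sw T tens = T"
  by (rule eq_basis_p2[where F="\<lambda>T. sw T tens"]) simp_all

lemma lin_reas_tens[simp]: "lin reas (tens (tens x y) z) = tens x (tens y z)"
proof -
  have "lin reas (tens (tens x y) z) = sw (lin reas (tens (tens x y) z)) tens"
    by (simp only: sw_tens_id)
  also have "\<dots> = tens x (tens y z)" by (simp del: sw_tens_id)
  finally show ?thesis .
qed

lemma mulmap_reas: "mulmap reas (tmult (tmult m n) p) (tmult m (tmult n p))"
  unfolding mulmap_bas split_paired_All
  by (simp only: tmult_bas tens_bas[symmetric] reas_bas tmult_tens lin_reas_tens) simp

lemma lin_app1_sw: "lin (app1 e) T = sw3 T (\<lambda>a b c. tens a (tens b (tens c e)))"
  by (rule eq_basis_p3r[where F="lin (app1 e)"]) simp_all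

lemma lin_app1_tens[simp]: "lin (app1 e) (tens x (tens y z)) = tens x (tens y (tens z e))"
  by (simp add: lin_app1_sw)

lemma mulmap_app1:
  assumes "bilin m4 e e = e"
  shows "mulmap (app1 e) (tmult m1 (tmult m2 m3)) (tmult m1 (tmult m2 (tmult m3 m4)))"
  unfolding mulmap_bas split_paired_All
  using assms by (simp only: tmult_bas app1_bas tmult_tens lin_app1_tens, simp)

lemma mulmap_comp:
  assumes "mulmap f m1 m2" "mulmap g m2 m3"
  shows "mulmap (\<lambda>i. lin g (f i)) m1 m3"
  using assms unfolding mulmap_def by (simp add: lin_lin[symmetric])

section \<open>inverses in associative algebras\<close>

lemma invD: "inv_pair M u x y \<Longrightarrow> bilin M x y = u" "inv_pair M u x y \<Longrightarrow> bilin M y x = u"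
  by (auto simp: inv_pair_def)

lemma inv_map:
  assumes "inv_pair M u x y" "mulmap f M M'" "lin f u = u'"
  shows "inv_pair M' u' (lin f x) (lin f y)"
  using assms unfolding inv_pair_def mulmap_def by metis

lemma inv_tens_left:
  assumes "inv_pair M u x y" "bilin m e e = e"
  shows "inv_pair (tmult m M) (tens e u) (tens e x) (tens e y)"
  using assms unfolding inv_pair_def by simp

context
  fixes M :: "'a \<Rightarrow> 'a \<Rightarrow> ('a \<Rightarrow>\<^sub>0 'k::field)" and u
  assumes A: "assoc_alg M u"
begin

lemma AA: "bilin M (bilin M x y) z = bilin M x (bilin M y z)" "bilin M u x = x" "bilin M x u = x"
  using A unfolding assoc_alg_def by auto

lemma inv_canc: "inv_pair M u x y \<Longrightarrow> bilin M x (bilin M y z) = z"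
  "inv_pair M u x y \<Longrightarrow> bilin M y (bilin M x z) = z"
  by (simp_all add: AA(2) invD flip: AA(1))

lemma inv3_rev:
  assumes "inv_pair M u a a'" "inv_pair M u b b'" "inv_pair M u c c'" "inv_pair M u d d'" "inv_pair M u e e'"
    and h: "bilin M (bilin M a b) c = bilin M d e"
  shows "bilin M (bilin M c' b') a' = bilin M e' d'"
proof -
  have h2: "bilin M a (bilin M b (bilin M c X)) = bilin M d (bilin M e X)" for X
    using arg_cong[OF h, of "\<lambda>t. bilin M t X"] by (simp add: AA(1))
  have "bilin M e' d' = bilin M e' (bilin M d' (bilin M a (bilin M b (bilin M c (bilin M c' (bilin M b' a'))))))"
    using assms(1-3) by (simp add: inv_canc AA(3) invD)
  also have "\<dots> = bilin M c' (bilin M b' a')"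
    unfolding h2 using assms(4,5) by (simp add: inv_canc)
  finally show ?thesis by (simp add: AA(1))
qed

lemma conj_swap1:
  assumes "inv_pair M u p p'" "bilin M x p = bilin M p y"
  shows "bilin M p' x = bilin M y p'"
proof -
  have "bilin M p' x = bilin M p' (bilin M x (bilin M p p'))" using assms(1) by (simp add: AA invD)
  also have "\<dots> = bilin M p' (bilin M p (bilin M y p'))" using assms(2) by (simp flip: AA(1))
  also have "\<dots> = bilin M y p'" using assms(1) by (simp add: inv_canc)
  finally show ?thesis .
qed

lemma conj_swap2:
  assumes "inv_pair M u p p'" "bilin M p x = bilin M y p"
  shows "bilin M x p' = bilin M p' y"
proof -
  have "bilin M x p' = bilin M p' (bilin M p (bilin M x p'))" using assms(1) by (simp add: inv_canc)
  also have "\<dots> = bilin M p' (bilin M y (bilin M p p'))" using assms(2) by (simp flip: AA(1))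
  also have "\<dots> = bilin M p' y" using assms(1) by (simp add: AA invD)
  finally show ?thesis .
qed

end


locale smash =
  fixes mH :: "'h \<Rightarrow> 'h \<Rightarrow> ('h \<Rightarrow>\<^sub>0 'k::field)" and uH :: "'h \<Rightarrow>\<^sub>0 'k"
    and D :: "'h \<Rightarrow> ('h \<times> 'h \<Rightarrow>\<^sub>0 'k)" and e :: "'h \<Rightarrow> 'k"
    and Phi Phii :: "'h \<times> 'h \<times> 'h \<Rightarrow>\<^sub>0 'k"
    and la :: "'h \<Rightarrow> 'a \<Rightarrow> ('a \<Rightarrow>\<^sub>0 'k)" and ra :: "'a \<Rightarrow> 'h \<Rightarrow> ('a \<Rightarrow>\<^sub>0 'k)"
    and mA :: "'a \<Rightarrow> 'a \<Rightarrow> ('a \<Rightarrow>\<^sub>0 'k)" and uA :: "'a \<Rightarrow>\<^sub>0 'k"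
    and mU :: "'u \<Rightarrow> 'u \<Rightarrow> ('u \<Rightarrow>\<^sub>0 'k)" and uU :: "'u \<Rightarrow>\<^sub>0 'k"
    and lam :: "'u \<Rightarrow> ('h \<times> 'u \<Rightarrow>\<^sub>0 'k)" and rho :: "'u \<Rightarrow> ('u \<times> 'h \<Rightarrow>\<^sub>0 'k)"
    and Pl Pli :: "'h \<times> 'h \<times> 'u \<Rightarrow>\<^sub>0 'k"
    and Pr Pri :: "'u \<times> 'h \<times> 'h \<Rightarrow>\<^sub>0 'k"
    and Plr Plri :: "'h \<times> 'u \<times> 'h \<Rightarrow>\<^sub>0 'k"
  assumes QB: "quasi_bialgebra mH uH D e Phi Phii"
    and BM: "bimodule_algebra mH uH D e Phi Phii la ra mA uA"
    and BC: "bicomodule_algebra mH uH D e Phi mU uU lam rho Pl Pli Pr Pri Plr Plri"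
begin

lemma LC: "left_comodule_algebra mH uH D e Phi mU uU lam Pl Pli"
  using BC unfolding bicomodule_algebra_def Let_def by blast
lemma RC: "right_comodule_algebra mH uH D e Phi mU uU rho Pr Pri"
  using BC unfolding bicomodule_algebra_def Let_def by blast

lemma AH: "assoc_alg mH uH" using QB unfolding quasi_bialgebra_def Let_def by blast
lemma AU: "assoc_alg mU uU" using LC unfolding left_comodule_algebra_def Let_def by blast

lemma hassoc[simp]: "bilin mH (bilin mH x y) z = bilin mH x (bilin mH y z)"
  and hunit[simp]: "bilin mH uH x = x" "bilin mH x uH = x"
  using AH unfolding assoc_alg_def by auto
lemma uassoc[simp]: "bilin mU (bilin mU x y) z = bilin mU x (bilin mU y z)"
  and uunit[simp]: "bilin mU uU x = x" "bilin mU x uU = x"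
  using AU unfolding assoc_alg_def by auto

lemma D_mult[simp]: "lin D (bilin mH x y) = bilin (tmult mH mH) (lin D x) (lin D y)"
  and D_unit[simp]: "lin D uH = tens uH uH"
  using QB unfolding quasi_bialgebra_def Let_def alg_map_def by auto
lemma lam_mult[simp]: "lin lam (bilin mU x y) = bilin (tmult mH mU) (lin lam x) (lin lam y)"
  and lam_unit[simp]: "lin lam uU = tens uH uU"
  using LC unfolding left_comodule_algebra_def Let_def alg_map_def by auto
lemma rho_mult[simp]: "lin rho (bilin mU x y) = bilin (tmult mU mH) (lin rho x) (lin rho y)"
  and rho_unit[simp]: "lin rho uU = tens uU uH"
  using RC unfolding right_comodule_algebra_def Let_def alg_map_def by auto
lemma eps_mult[simp]: "lfun e (bilin mH x y) = lfun e x * lfun e y"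
  and eps_unit[simp]: "lfun e uH = 1"
  using QB unfolding quasi_bialgebra_def Let_def by auto

lemma la_la[simp]: "bilin la g (bilin la h x) = bilin la (bilin mH g h) x"
  and la_unit[simp]: "bilin la uH x = x"
  and ra_ra[simp]: "bilin ra (bilin ra x g) h = bilin ra x (bilin mH g h)"
  and ra_unit[simp]: "bilin ra x uH = x"
  and la_ra[simp]: "bilin la g (bilin ra x h) = bilin ra (bilin la g x) h"
  and A_unit[simp]: "bilin mA uA x = x" "bilin mA x uA = x"
  and la_uA[simp]: "bilin la h uA = vsc (lfun e h) uA"
  and ra_uA[simp]: "bilin ra uA h = vsc (lfun e h) uA"
  using BM unfolding bimodule_algebra_def by auto

abbreviation "act h x k \<equiv> bilin ra (bilin la h x) k"

lemma la_mA[simp]: "bilin la h (bilin mA x y) = sw (lin D h) (\<lambda>a b. bilin mA (bilin la a x) (bilin la b y))"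
  using BM unfolding bimodule_algebra_def by (simp add: sw_def)
lemma ra_mA[simp]: "bilin ra (bilin mA x y) h = sw (lin D h) (\<lambda>a b. bilin mA (bilin ra x a) (bilin ra y b))"
  using BM unfolding bimodule_algebra_def by (simp add: sw_def)

lemma qassoc: "bilin mA (bilin mA x y) z =
   sw3 Phi (\<lambda>X1 X2 X3. sw3 Phii (\<lambda>x1 x2 x3. bilin mA (act X1 x x1) (bilin mA (act X2 y x2) (act X3 z x3))))"
  using BM unfolding bimodule_algebra_def by (simp add: sw_def2 bact_def case_prod_unfold)

end


lemma push_bilin1[simp]: "bilin M (sw T F) Y = sw T (\<lambda>a b. bilin M (F a b) Y)"
  by (rule sw_push) simp
lemma push_bilin2[simp]: "bilin M X (sw T F) = sw T (\<lambda>a b. bilin M X (F a b))"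
  by (rule sw_push[of "\<lambda>v. bilin M X v"]) simp
lemma push_sw[simp]: "sw (sw T F) G = sw T (\<lambda>a b. sw (F a b) G)"
  by (rule sw_push[of "\<lambda>v. sw v G"]) simp
lemma push_tens1[simp]: "tens (sw T F) y = sw T (\<lambda>a b. tens (F a b) y)"
  by (rule sw_push[of "\<lambda>v. tens v y"]) simp
lemma push_tens2[simp]: "tens x (sw T F) = sw T (\<lambda>a b. tens x (F a b))"
  by (rule sw_push[of "\<lambda>v. tens x v"]) simp
lemma push_lin[simp]: "lin f (sw T F) = sw T (\<lambda>a b. lin f (F a b))"
  by (rule sw_push[of "\<lambda>v. lin f v"]) simp

lemma sw_swap31: "sw T (\<lambda>a b. sw3 S (\<lambda>c d e. K a b c d e)) = sw3 S (\<lambda>c d e. sw T (\<lambda>a b. K a b c d e))"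
  by (subst sw_swap) (subst sw_swap, rule refl)
lemma sw_swap13: "sw3 S (\<lambda>c d e. sw T (\<lambda>a b. K a b c d e)) = sw T (\<lambda>a b. sw3 S (\<lambda>c d e. K a b c d e))"
  by (rule sw_swap31[symmetric])
lemma sink32: "sw3 T (\<lambda>a b c. sw S (\<lambda>d e. K a b c d e)) = sw S (\<lambda>d e. sw3 T (\<lambda>a b c. K a b c d e))"
  by (rule sw_swap13)
lemma sink22: "sw T (\<lambda>a b. sw S (\<lambda>d e. K a b d e)) = sw S (\<lambda>d e. sw T (\<lambda>a b. K a b d e))"
  by (rule sw_swap)

lemma sink42: "sw4 T (\<lambda>a b c x. sw S (\<lambda>d e. K a b c x d e)) = sw S (\<lambda>d e. sw4 T (\<lambda>a b c x. K a b c x d e))"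
  by (subst sink32[symmetric]) (subst sink22, rule refl)

lemma sw_swap33: "sw3 T (\<lambda>a b c. sw3 S (\<lambda>d e f. K a b c d e f)) = sw3 S (\<lambda>d e f. sw3 T (\<lambda>a b c. K a b c d e f))"
  by (subst sw_swap31) (subst sw_swap31, rule refl)

declare bilin_bas[simp del] tens_bas[simp del]

context smash
begin

abbreviation "tens5 x1 x2 x3 x4 x5 \<equiv> tens x1 (tens x2 (tens x3 (tens x4 x5)))"
abbreviation "tens7 x1 x2 x3 x4 x5 x6 x7 \<equiv> tens x1 (tens x2 (tens x3 (tens x4 (tens x5 (tens x6 x7)))))"
abbreviation "MR2 \<equiv> tmult mH (tmult mH (tmult mU (tmult mH mH)))"
abbreviation "MR \<equiv> tmult mH (tmult mH (tmult mH (tmult mU (tmult mH (tmult mH mH)))))"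
abbreviation sw5 where "sw5 T F \<equiv> sw T (\<lambda>x1 y. sw4 y (\<lambda>x2 x3 x4 x5. F x1 x2 x3 x4 x5))"
abbreviation sw7 where "sw7 T F \<equiv> sw T (\<lambda>x1 y. sw y (\<lambda>x2 z. sw5 z (\<lambda>x3 x4 x5 x6 x7. F x1 x2 x3 x4 x5 x6 x7)))"

definition "E2 f g W = sw5 W (\<lambda>x1 x2 x3 x4 x5. tens (bilin mA (act x1 f x4) (act x2 g x5)) x3)"

definition "p123 X = sw3 X (\<lambda>a b c. tens5 a b c uH uH)"
definition "p23 X = sw X (\<lambda>b c. tens5 uH b c uH uH)"
definition "p234 X = sw3 X (\<lambda>b c d. tens5 uH b c d uH)"
definition "p34 X = sw X (\<lambda>c d. tens5 uH uH c d uH)"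
definition "p345 X = sw3 X (\<lambda>c d x. tens5 uH uH c d x)"

definition "Q u v = bilin MR2 (p123 Pli) (bilin MR2 (p23 (lam u)) (bilin MR2 (p234 Plri)
   (bilin MR2 (p34 (rho v)) (p345 Pri))))"

abbreviation "SM \<equiv> smash_mult mH mU la ra mA lam rho Pli Plri Pri"

lemma SM_sw: "SM (f, u) (g, v) = sw3 Pli (\<lambda>l1 l2 l3. sw3 Plri (\<lambda>t1 t2 t3. sw3 Pri (\<lambda>r1 r2 r3.
   sw (lam u) (\<lambda>p q. sw (rho v) (\<lambda>s w. tens (bilin mA (act l1 (bas f) (bilin mH t3 (bilin mH w r2)))
     (act (bilin mH l2 (bilin mH p t1)) (bas g) r3)) (bilin mU l3 (bilin mU q (bilin mU t2 (bilin mU s r1)))))))))"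
  unfolding smash_mult_def bact_def by (simp add: sw_def2 case_prod_unfold)

lemma Ic: "SM (f, u) (g, v) = E2 (bas f) (bas g) (Q u v)"
  unfolding SM_sw E2_def Q_def p123_def p23_def p234_def p34_def p345_def
  apply simp
  apply (simp only: sink32[of Pli])
  apply (simp only: sink32[of Plri])
  apply (simp only: sink32[of Pri])
  apply (simp only: sink22[of "lam u"])
  done

definition "SMv x c y w = sw3 Pli (\<lambda>l1 l2 l3. sw3 Plri (\<lambda>t1 t2 t3. sw3 Pri (\<lambda>r1 r2 r3.
   sw (lam c) (\<lambda>p q. sw (rho w) (\<lambda>s w. tens (bilin mA (act l1 x (bilin mH t3 (bilin mH w r2)))
     (act (bilin mH l2 (bilin mH p t1)) y r3)) (bilin mU l3 (bilin mU q (bilin mU t2 (bilin mU s r1)))))))))"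

lemma SM_vec: "bilin SM (tens x (bas c)) (tens y (bas w)) = SMv x c y w"
proof (rule eq_basis2[where F="\<lambda>x y. bilin SM (tens x (bas c)) (tens y (bas w))"])
  fix i j
  show "bilin SM (tens (bas i) (bas c)) (tens (bas j) (bas w)) = SMv (bas i) c (bas j) w"
    by (simp add: tens_bas bilin_bas SM_sw SMv_def)
qed (simp_all add: SMv_def)

definition "E f g h W = sw7 W (\<lambda>x1 x2 x3 x4 x5 x6 x7.
   tens (bilin mA (act x1 f x5) (bilin mA (act x2 g x6) (act x3 h x7))) x4)"

definition "q1234 X = sw4 X (\<lambda>a b c d. tens7 a b c d uH uH uH)"
definition "q234 X = sw3 X (\<lambda>b c d. tens7 uH b c d uH uH uH)"
definition "q2345 X = sw4 X (\<lambda>b c d x. tens7 uH b c d x uH uH)"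
definition "q345 X = sw3 X (\<lambda>c d x. tens7 uH uH c d x uH uH)"
definition "q3456 X = sw4 X (\<lambda>c d x f. tens7 uH uH c d x f uH)"
definition "q456 X = sw3 X (\<lambda>d x f. tens7 uH uH uH d x f uH)"
definition "q4567 X = sw4 X (\<lambda>d x f g. tens7 uH uH uH d x f g)"

definition "iota Y = sw5 Y (\<lambda>x1 x2 x3 x4 x5. sw (lin lam x3) (\<lambda>p q. tens7 x1 x2 p q x4 x5 uH))"
definition "iota' Y = sw5 Y (\<lambda>x1 x2 x3 x4 x5. sw (lin rho x3) (\<lambda>p q. tens7 uH x1 x2 p q x4 x5))"

definition "dIII X = lin reas (lin (tmap D bas) X)"
definition "IdII X = lin (tmap bas reas) (lin (tmap bas (tmap D bas)) X)"
definition "IIdI X = lin (tmap bas (tmap bas D)) X"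
definition "IdR X = lin (tmap bas D) X"

lemma F1: assumes "\<And>b c d. lf (\<lambda>a. K a b c d)" "\<And>a c d. lf (\<lambda>b. K a b c d)"
   "\<And>a b d. lf (\<lambda>c. K a b c d)" "\<And>a b c. lf (\<lambda>d. K a b c d)"
  shows "sw4 (dIII X) K = sw3 X (\<lambda>a b c. sw (lin D a) (\<lambda>a1 a2. K a1 a2 b c))"
  unfolding dIII_def using assms by (simp add: sw_swap[of "lin D _"])

lemma F4: assumes "\<And>b c. lf (\<lambda>a. K a b c)" "\<And>a c. lf (\<lambda>b. K a b c)" "\<And>a b. lf (\<lambda>c. K a b c)"
  shows "sw3 (dIII X) K = sw X (\<lambda>a b. sw (lin D a) (\<lambda>a1 a2. K a1 a2 b))"
  unfolding dIII_def using assms by simp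

lemma F2: assumes "\<And>b c d. lf (\<lambda>a. K a b c d)" "\<And>a c d. lf (\<lambda>b. K a b c d)"
   "\<And>a b d. lf (\<lambda>c. K a b c d)" "\<And>a b c. lf (\<lambda>d. K a b c d)"
  shows "sw4 (IdII X) K = sw3 X (\<lambda>a b c. sw (lin D b) (\<lambda>b1 b2. K a b1 b2 c))"
  unfolding IdII_def using assms by (simp add: sw_swap[of "lin D _"])

lemma F3: assumes "\<And>b c d. lf (\<lambda>a. K a b c d)" "\<And>a c d. lf (\<lambda>b. K a b c d)"
   "\<And>a b d. lf (\<lambda>c. K a b c d)" "\<And>a b c. lf (\<lambda>d. K a b c d)"
  shows "sw4 (IIdI X) K = sw3 X (\<lambda>a b c. sw (lin D c) (\<lambda>c1 c2. K a b c1 c2))"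
  unfolding IIdI_def using assms by simp

lemma F5: assumes "\<And>b c. lf (\<lambda>a. K a b c)" "\<And>a c. lf (\<lambda>b. K a b c)" "\<And>a b. lf (\<lambda>c. K a b c)"
  shows "sw3 (IdR X) K = sw X (\<lambda>a b. sw (lin D b) (\<lambda>b1 b2. K a b1 b2))"
  unfolding IdR_def using assms by simp

definition "L W w = bilin MR (q1234 (lin (app1 uU) Phi)) (bilin MR (q1234 (dIII Pli))
   (bilin MR (iota W) (bilin MR (q3456 (IIdI Plri)) (bilin MR (q456 (IdR (rho w)))
   (bilin MR (q4567 (IdII Pri)) (q4567 (tens uU Phii)))))))"

definition "L' u W = bilin MR (q1234 (IdII Pli)) (bilin MR (q234 (dIII (lam u)))
   (bilin MR (q2345 (dIII Plri)) (bilin MR (iota' W) (q4567 (IIdI Pri)))))"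

lemma Ia: "bilin SM (E2 f g (bas (a, b, c, d, x))) (bas (h, w)) = E f g (bas h) (L (bas (a, b, c, d, x)) w)"
  apply (simp add: E2_def tens_bas[symmetric] SM_vec del: tens_bas)
  apply (simp add: SMv_def E_def L_def q1234_def q234_def q2345_def q345_def q3456_def q456_def q4567_def iota_def qassoc)
  apply (simp add: sink32[of Pli "lin D _"] sink32[of Plri "lin D _"] sink32[of Pri "lin D _"]
     sink22[of "lam c" "lin D _"] sink22[of "rho w" "lin D _"]
     sink42[of "dIII Pli" "lin D _"] sink42[of "IIdI Plri" "lin D _"] sink42[of "IdII Pri" "lin D _"]
     sink32[of "IdR (rho w)" "lin D _"]
     F1[symmetric, where X=Pli] F2[symmetric, where X=Pri] F3[symmetric, where X=Plri] F5[symmetric, where X="rho w"])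
  apply (simp only: sink42[of "dIII Pli"])?
  apply (simp only: sink42[of "IIdI Plri"])?
  apply (simp only: sink42[of "IdII Pri"])?
  apply (simp only: sink22[of "lam c"])?
  apply (simp only: sink32[of "IdR (rho w)"])?
  apply (simp only: sink32[of "Phi"])?
  apply (simp only: sink32[of "Phii"])?
  done

lemma Ib: "bilin SM (bas (f, u)) (E2 g h (bas (a, b, c, d, x))) = E (bas f) g h (L' u (bas (a, b, c, d, x)))"
  apply (simp add: E2_def tens_bas[symmetric] SM_vec del: tens_bas)
  apply (simp add: SMv_def E_def L'_def q1234_def q234_def q2345_def q345_def q3456_def q456_def q4567_def iota'_def)
  apply (simp add: sink32[of Pli "lin D _"] sink32[of Plri "lin D _"] sink32[of Pri "lin D _"]
     sink22[of "lam u" "lin D _"] sink22[of "rho c" "lin D _"]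
     sink42[of "IdII Pli" "lin D _"] sink42[of "dIII Plri" "lin D _"] sink42[of "IIdI Pri" "lin D _"]
     sink32[of "dIII (lam u)" "lin D _"]
     F2[symmetric, where X=Pli] F1[symmetric, where X=Plri] F3[symmetric, where X=Pri] F4[symmetric, where X="lam u"])
  apply (simp only: sink42[of "IdII Pli"])?
  apply (simp only: sink42[of "dIII Plri"])?
  apply (simp only: sink42[of "IIdI Pri"])?
  apply (simp only: sink32[of "dIII (lam u)"])?
  apply (simp only: sink22[of "rho c"])?
  done

end


context smash
begin

lemma q1234_mult: "q1234 (bilin (tmult mH (tmult mH (tmult mH mU))) X Y) = bilin MR (q1234 X) (q1234 Y)"
  by (rule eq_basis2[where F="\<lambda>X Y. q1234 (bilin (tmult mH (tmult mH (tmult mH mU))) X Y)"])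
     (simp_all add: q1234_def split_paired_all tens_bas[symmetric] del: tens_bas)

lemma q234_mult: "q234 (bilin (tmult mH (tmult mH mU)) X Y) = bilin MR (q234 X) (q234 Y)"
  by (rule eq_basis2[where F="\<lambda>X Y. q234 (bilin (tmult mH (tmult mH mU)) X Y)"])
     (simp_all add: q234_def split_paired_all tens_bas[symmetric] del: tens_bas)

lemma q2345_mult: "q2345 (bilin (tmult mH (tmult mH (tmult mU mH))) X Y) = bilin MR (q2345 X) (q2345 Y)"
  by (rule eq_basis2[where F="\<lambda>X Y. q2345 (bilin (tmult mH (tmult mH (tmult mU mH))) X Y)"])
     (simp_all add: q2345_def split_paired_all tens_bas[symmetric] del: tens_bas)

lemma q345_mult: "q345 (bilin (tmult mH (tmult mU mH)) X Y) = bilin MR (q345 X) (q345 Y)"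
  by (rule eq_basis2[where F="\<lambda>X Y. q345 (bilin (tmult mH (tmult mU mH)) X Y)"])
     (simp_all add: q345_def split_paired_all tens_bas[symmetric] del: tens_bas)

lemma q3456_mult: "q3456 (bilin (tmult mH (tmult mU (tmult mH mH))) X Y) = bilin MR (q3456 X) (q3456 Y)"
  by (rule eq_basis2[where F="\<lambda>X Y. q3456 (bilin (tmult mH (tmult mU (tmult mH mH))) X Y)"])
     (simp_all add: q3456_def split_paired_all tens_bas[symmetric] del: tens_bas)

lemma q456_mult: "q456 (bilin (tmult mU (tmult mH mH)) X Y) = bilin MR (q456 X) (q456 Y)"
  by (rule eq_basis2[where F="\<lambda>X Y. q456 (bilin (tmult mU (tmult mH mH)) X Y)"])
     (simp_all add: q456_def split_paired_all tens_bas[symmetric] del: tens_bas)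

lemma q4567_mult: "q4567 (bilin (tmult mU (tmult mH (tmult mH mH))) X Y) = bilin MR (q4567 X) (q4567 Y)"
  by (rule eq_basis2[where F="\<lambda>X Y. q4567 (bilin (tmult mU (tmult mH (tmult mH mH))) X Y)"])
     (simp_all add: q4567_def split_paired_all tens_bas[symmetric] del: tens_bas)


lemma iota_mult: "iota (bilin MR2 X Y) = bilin MR (iota X) (iota Y)"
  apply (rule eq_basis2[where F="\<lambda>X Y. iota (bilin MR2 X Y)"])
  apply (simp_all add: iota_def split_paired_all tens_bas[symmetric] del: tens_bas)
  apply (subst sw_swap, rule refl)
  done
lemma iota'_mult: "iota' (bilin MR2 X Y) = bilin MR (iota' X) (iota' Y)"
  apply (rule eq_basis2[where F="\<lambda>X Y. iota' (bilin MR2 X Y)"])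
  apply (simp_all add: iota'_def split_paired_all tens_bas[symmetric] del: tens_bas)
  apply (subst sw_swap, rule refl)
  done

lemma q1234_tens: "q1234 (tens uH X) = q234 X"
  by (simp add: q1234_def q234_def)
lemma q2345_app1: "q2345 (lin (app1 uH) X) = q234 X"
  by (simp add: q2345_def q234_def)
lemma q2345_tens: "q2345 (tens uH X) = q345 X"
  by (simp add: q2345_def q345_def)
lemma q3456_app1: "q3456 (lin (app1 uH) X) = q345 X"
  by (simp add: q3456_def q345_def)
lemma q3456_tens: "q3456 (tens uH X) = q456 X"
  by (simp add: q3456_def q456_def)
lemma q4567_app1: "q4567 (lin (app1 uH) X) = q456 X"
  by (simp add: q4567_def q456_def)

definition "IIl X = lin (tmap bas (tmap bas lam)) X"
definition "Il X = lin (tmap bas lam) X"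
definition "IlI X = lin (tmap bas reas) (lin (tmap bas (tmap lam bas)) X)"
definition "lI X = lin reas (lin (tmap lam bas) X)"
definition "IIr X = lin (tmap bas (tmap bas rho)) X"
definition "Ir X = lin (tmap bas rho) X"
definition "IrI X = lin (tmap bas reas) (lin (tmap bas (tmap rho bas)) X)"
definition "rI X = lin reas (lin (tmap rho bas) X)"

lemma iota_p123: "iota (p123 X) = q1234 (IIl X)"
  by (simp add: iota_def p123_def q1234_def IIl_def)
lemma iota_p23: "iota (p23 X) = q234 (Il X)"
  by (simp add: iota_def p23_def q234_def Il_def)
lemma iota_p234: "iota (p234 X) = q2345 (IlI X)"
  by (simp add: iota_def p234_def q2345_def IlI_def)
lemma iota_p34: "iota (p34 X) = q345 (lI X)"
  by (simp add: iota_def p34_def q345_def lI_def)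
lemma iota_p345: "iota (p345 X) = q3456 (lI X)"
  by (simp add: iota_def p345_def q3456_def lI_def sink22[of "lin lam _"])
lemma iota'_p123: "iota' (p123 X) = q2345 (IIr X)"
  by (simp add: iota'_def p123_def q2345_def IIr_def)
lemma iota'_p23: "iota' (p23 X) = q345 (Ir X)"
  by (simp add: iota'_def p23_def q345_def Ir_def)
lemma iota'_p234: "iota' (p234 X) = q3456 (IrI X)"
  by (simp add: iota'_def p234_def q3456_def IrI_def)
lemma iota'_p34: "iota' (p34 X) = q456 (rI X)"
  by (simp add: iota'_def p34_def q456_def rI_def)
lemma iota'_p345: "iota' (p345 X) = q4567 (rI X)"
  by (simp add: iota'_def p345_def q4567_def rI_def sink22[of "lin rho _"])


lemma D_mm: "mulmap D mH (tmult mH mH)" by (simp add: mulmap_def)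
lemma lam_mm: "mulmap lam mU (tmult mH mU)" by (simp add: mulmap_def)
lemma rho_mm: "mulmap rho mU (tmult mU mH)" by (simp add: mulmap_def)
lemma id_mm: "mulmap bas m m" by (rule mulmap_id)

lemmas mm_rules = D_mm lam_mm rho_mm id_mm mulmap_tmap mulmap_reas

lemma AHH: "assoc_alg (tmult mH mH) (tens uH uH)" by (rule assoc_alg_tmult[OF AH AH])
lemma AUH: "assoc_alg (tmult mU mH) (tens uU uH)" by (rule assoc_alg_tmult[OF AU AH])
lemma AHU: "assoc_alg (tmult mH mU) (tens uH uU)" by (rule assoc_alg_tmult[OF AH AU])
lemma A3l: "assoc_alg (tmult mH (tmult mH mU)) (tens uH (tens uH uU))" by (rule assoc_alg_tmult[OF AH AHU])
lemma A3r: "assoc_alg (tmult mU (tmult mH mH)) (tens uU (tens uH uH))" by (rule assoc_alg_tmult[OF AU AHH])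
lemma A3m: "assoc_alg (tmult mH (tmult mU mH)) (tens uH (tens uU uH))" by (rule assoc_alg_tmult[OF AH AUH])
lemma A3h: "assoc_alg (tmult mH (tmult mH mH)) (tens uH (tens uH uH))" by (rule assoc_alg_tmult[OF AH AHH])
lemma A4l: "assoc_alg (tmult mH (tmult mH (tmult mH mU))) (tens uH (tens uH (tens uH uU)))" by (rule assoc_alg_tmult[OF AH A3l])
lemma A4r: "assoc_alg (tmult mU (tmult mH (tmult mH mH))) (tens uU (tens uH (tens uH uH)))" by (rule assoc_alg_tmult[OF AU A3h])
lemma A4m: "assoc_alg (tmult mH (tmult mH (tmult mU mH))) (tens uH (tens uH (tens uU uH)))" by (rule assoc_alg_tmult[OF AH A3m])
lemma A4n: "assoc_alg (tmult mH (tmult mU (tmult mH mH))) (tens uH (tens uU (tens uH uH)))" by (rule assoc_alg_tmult[OF AH A3r])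

lemma Pl_inv: "inv_pair (tmult mH (tmult mH mU)) (tens uH (tens uH uU)) Pl Pli"
  using LC unfolding left_comodule_algebra_def Let_def by blast
lemma Pr_inv: "inv_pair (tmult mU (tmult mH mH)) (tens uU (tens uH uH)) Pr Pri"
  using RC unfolding right_comodule_algebra_def Let_def by blast
lemma Plr_inv: "inv_pair (tmult mH (tmult mU mH)) (tens uH (tens uU uH)) Plr Plri"
  using BC unfolding bicomodule_algebra_def Let_def by blast
lemma Phi_inv: "inv_pair (tmult mH (tmult mH mH)) (tens uH (tens uH uH)) Phi Phii"
  using QB unfolding quasi_bialgebra_def Let_def by blast

lemma ax_lcomod: "bilin (tmult mH (tmult mH mU)) (Il (lin lam x)) Pl = bilin (tmult mH (tmult mH mU)) Pl (dIII (lin lam x))"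
  using LC unfolding left_comodule_algebra_def Let_def Il_def dIII_def by blast
lemma ax_lpent: "bilin (tmult mH (tmult mH (tmult mH mU))) (bilin (tmult mH (tmult mH (tmult mH mU))) (tens uH Pl) (IdII Pl)) (lin (app1 uU) Phi)
   = bilin (tmult mH (tmult mH (tmult mH mU))) (IIl Pl) (dIII Pl)"
  using LC unfolding left_comodule_algebra_def Let_def IIl_def dIII_def IdII_def by blast
lemma ax_rcomod: "bilin (tmult mU (tmult mH mH)) Pr (rI (lin rho x)) = bilin (tmult mU (tmult mH mH)) (IdR (lin rho x)) Pr"
  using RC unfolding right_comodule_algebra_def Let_def rI_def IdR_def by blast
lemma ax_rpent: "bilin (tmult mU (tmult mH (tmult mH mH))) (bilin (tmult mU (tmult mH (tmult mH mH))) (tens uU Phi) (IdII Pr)) (lin (app1 uH) Pr)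
   = bilin (tmult mU (tmult mH (tmult mH mH))) (IIdI Pr) (rI Pr)"
  using RC unfolding right_comodule_algebra_def Let_def IIdI_def rI_def IdII_def by blast
lemma ax_compat: "bilin (tmult mH (tmult mU mH)) Plr (lI (lin rho x)) = bilin (tmult mH (tmult mU mH)) (Ir (lin lam x)) Plr"
  using BC unfolding bicomodule_algebra_def Let_def lI_def Ir_def by blast
lemma ax_b2: "bilin (tmult mH (tmult mH (tmult mU mH))) (bilin (tmult mH (tmult mH (tmult mU mH))) (tens uH Plr) (IlI Plr)) (lin (app1 uH) Pl)
   = bilin (tmult mH (tmult mH (tmult mU mH))) (IIr Pl) (dIII Plr)"
  using BC unfolding bicomodule_algebra_def Let_def IlI_def IIr_def dIII_def by blast
lemma ax_b3: "bilin (tmult mH (tmult mU (tmult mH mH))) (bilin (tmult mH (tmult mU (tmult mH mH))) (tens uH Pr) (IrI Plr)) (lin (app1 uH) Plr)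
   = bilin (tmult mH (tmult mU (tmult mH mH))) (IIdI Plr) (lI Pr)"
  using BC unfolding bicomodule_algebra_def Let_def IrI_def IIdI_def lI_def by blast


lemma inv_unit: "inv_pair M u x y \<Longrightarrow> u = u' \<Longrightarrow> inv_pair M u' x y" by simp

abbreviation "M3l \<equiv> tmult mH (tmult mH mU)"
abbreviation "M3r \<equiv> tmult mU (tmult mH mH)"
abbreviation "M3m \<equiv> tmult mH (tmult mU mH)"
abbreviation "M4l \<equiv> tmult mH (tmult mH (tmult mH mU))"
abbreviation "M4r \<equiv> tmult mU (tmult mH (tmult mH mH))"
abbreviation "M4m \<equiv> tmult mH (tmult mH (tmult mU mH))"
abbreviation "N4 \<equiv> tmult mH (tmult mU (tmult mH mH))"
abbreviation "U4l \<equiv> tens uH (tens uH (tens uH uU))"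
abbreviation "U4r \<equiv> tens uU (tens uH (tens uH uH))"
abbreviation "U4m \<equiv> tens uH (tens uH (tens uU uH))"
abbreviation "UN4 \<equiv> tens uH (tens uU (tens uH uH))"

lemma i_dIII_Pl: "inv_pair M4l U4l (dIII Pl) (dIII Pli)"
  unfolding dIII_def
  by (rule inv_unit, rule inv_map[OF inv_map[OF Pl_inv]]) (auto intro: mm_rules)
lemma i_IdII_Pl: "inv_pair M4l U4l (IdII Pl) (IdII Pli)"
  unfolding IdII_def
  by (rule inv_unit, rule inv_map[OF inv_map[OF Pl_inv]]) (auto intro: mm_rules)
lemma i_IIl_Pl: "inv_pair M4l U4l (IIl Pl) (IIl Pli)"
  unfolding IIl_def
  by (rule inv_unit, rule inv_map[OF Pl_inv]) (auto intro: mm_rules)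
lemma i_tens_Pl: "inv_pair M4l U4l (tens uH Pl) (tens uH Pli)"
  by (rule inv_tens_left[OF Pl_inv]) simp
lemma i_app1_Phi: "inv_pair M4l U4l (lin (app1 uU) Phi) (lin (app1 uU) Phii)"
  by (rule inv_unit, rule inv_map[OF Phi_inv]) (auto intro: mulmap_app1 simp: lin_app1_tens)

lemma i_IdII_Pr: "inv_pair M4r U4r (IdII Pr) (IdII Pri)"
  unfolding IdII_def
  by (rule inv_unit, rule inv_map[OF inv_map[OF Pr_inv]]) (auto intro: mm_rules)
lemma i_IIdI_Pr: "inv_pair M4r U4r (IIdI Pr) (IIdI Pri)"
  unfolding IIdI_def
  by (rule inv_unit, rule inv_map[OF Pr_inv]) (auto intro: mm_rules)
lemma i_rI_Pr: "inv_pair M4r U4r (rI Pr) (rI Pri)"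
  unfolding rI_def
  by (rule inv_unit, rule inv_map[OF inv_map[OF Pr_inv]]) (auto intro: mm_rules)
lemma i_tens_Phi: "inv_pair M4r U4r (tens uU Phi) (tens uU Phii)"
  by (rule inv_tens_left[OF Phi_inv]) simp
lemma i_app1_Pr: "inv_pair M4r U4r (lin (app1 uH) Pr) (lin (app1 uH) Pri)"
  by (rule inv_unit, rule inv_map[OF Pr_inv]) (auto intro: mulmap_app1 simp: lin_app1_tens)

lemma i_tens_Plr: "inv_pair M4m U4m (tens uH Plr) (tens uH Plri)"
  by (rule inv_tens_left[OF Plr_inv]) simp
lemma i_IlI_Plr: "inv_pair M4m U4m (IlI Plr) (IlI Plri)"
  unfolding IlI_def
  by (rule inv_unit, rule inv_map[OF inv_map[OF Plr_inv]]) (auto intro: mm_rules)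
lemma i_app1_Pl: "inv_pair M4m U4m (lin (app1 uH) Pl) (lin (app1 uH) Pli)"
  by (rule inv_unit, rule inv_map[OF Pl_inv]) (auto intro: mulmap_app1 simp: lin_app1_tens)
lemma i_IIr_Pl: "inv_pair M4m U4m (IIr Pl) (IIr Pli)"
  unfolding IIr_def
  by (rule inv_unit, rule inv_map[OF Pl_inv]) (auto intro: mm_rules)
lemma i_dIII_Plr: "inv_pair M4m U4m (dIII Plr) (dIII Plri)"
  unfolding dIII_def
  by (rule inv_unit, rule inv_map[OF inv_map[OF Plr_inv]]) (auto intro: mm_rules)

lemma i_tens_Pr: "inv_pair N4 UN4 (tens uH Pr) (tens uH Pri)"
  by (rule inv_tens_left[OF Pr_inv]) simp
lemma i_IrI_Plr: "inv_pair N4 UN4 (IrI Plr) (IrI Plri)"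
  unfolding IrI_def
  by (rule inv_unit, rule inv_map[OF inv_map[OF Plr_inv]]) (auto intro: mm_rules)
lemma i_app1_Plr: "inv_pair N4 UN4 (lin (app1 uH) Plr) (lin (app1 uH) Plri)"
  by (rule inv_unit, rule inv_map[OF Plr_inv]) (auto intro: mulmap_app1 simp: lin_app1_tens)
lemma i_IIdI_Plr: "inv_pair N4 UN4 (IIdI Plr) (IIdI Plri)"
  unfolding IIdI_def
  by (rule inv_unit, rule inv_map[OF Plr_inv]) (auto intro: mm_rules)
lemma i_lI_Pr: "inv_pair N4 UN4 (lI Pr) (lI Pri)"
  unfolding lI_def
  by (rule inv_unit, rule inv_map[OF inv_map[OF Pr_inv]]) (auto intro: mm_rules)


lemma inv_left_mult:
  assumes A: "assoc_alg M u" and i: "inv_pair M u c c'" and h: "bilin M (bilin M c' b') a' = X"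
  shows "bilin M c X = bilin M b' a'"
  using h inv_canc[OF A i] AA[OF A] by (metis)

lemma S1: "bilin M4l (lin (app1 uU) Phi) (bilin M4l (dIII Pli) (IIl Pli)) = bilin M4l (IdII Pli) (tens uH Pli)"
  by (rule inv_left_mult[OF A4l i_app1_Phi],
      rule inv3_rev[OF A4l i_tens_Pl i_IdII_Pl i_app1_Phi i_IIl_Pl i_dIII_Pl ax_lpent])
lemma S2: "bilin M3l Pli (Il (lam u)) = bilin M3l (dIII (lam u)) Pli"
  using conj_swap1[OF A3l Pl_inv ax_lcomod[of "bas u"]] by simp
lemma S3: "bilin M3r (rI (rho w)) Pri = bilin M3r Pri (IdR (rho w))"
  using conj_swap2[OF A3r Pr_inv ax_rcomod[of "bas w"]] by simp
lemma S4: "bilin M4r (lin (app1 uH) Pri) (bilin M4r (IdII Pri) (tens uU Phii)) = bilin M4r (rI Pri) (IIdI Pri)"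
  using inv3_rev[OF A4r i_tens_Phi i_IdII_Pr i_app1_Pr i_IIdI_Pr i_rI_Pr ax_rpent] AA[OF A4r] by simp
lemma S5: "bilin M4m (lin (app1 uH) Pli) (bilin M4m (IlI Plri) (tens uH Plri)) = bilin M4m (dIII Plri) (IIr Pli)"
  using inv3_rev[OF A4m i_tens_Plr i_IlI_Plr i_app1_Pl i_IIr_Pl i_dIII_Plr ax_b2] AA[OF A4m] by simp
lemma S6: "bilin N4 (lin (app1 uH) Plri) (bilin N4 (IrI Plri) (tens uH Pri)) = bilin N4 (lI Pri) (IIdI Plri)"
  using inv3_rev[OF A4n i_tens_Pr i_IrI_Plr i_app1_Plr i_IIdI_Plr i_lI_Pr ax_b3] AA[OF A4n] by simp
lemma S7: "bilin M3m Plri (Ir (lam v)) = bilin M3m (lI (rho v)) Plri"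
  using conj_swap2[OF A3m Plr_inv ax_compat[of "bas v"]] by simp


lemma AR: "assoc_alg MR (tens uH (tens uH (tens uH (tens uU (tens uH (tens uH uH))))))"
  by (intro assoc_alg_tmult AH AU)
lemma Rassoc: "bilin MR (bilin MR x y) z = bilin MR x (bilin MR y z)"
  using AR unfolding assoc_alg_def by blast

lemma tail2: "bilin MR X Y = bilin MR V W \<Longrightarrow> bilin MR X (bilin MR Y Z) = bilin MR V (bilin MR W Z)"
  by (metis Rassoc)
lemma tail3: "bilin MR X (bilin MR Y W) = bilin MR V W' \<Longrightarrow> bilin MR X (bilin MR Y (bilin MR W Z)) = bilin MR V (bilin MR W' Z)"
  by (metis Rassoc)
lemma tail3': "bilin MR X (bilin MR Y W) = bilin MR V W' \<Longrightarrow> bilin MR V (bilin MR W' Z) = bilin MR X (bilin MR Y (bilin MR W Z))"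
  by (metis Rassoc)

lemma T1: "bilin MR (q1234 (lin (app1 uU) Phi)) (bilin MR (q1234 (dIII Pli)) (bilin MR (q1234 (IIl Pli)) Z))
  = bilin MR (q1234 (IdII Pli)) (bilin MR (q234 Pli) Z)"
  by (rule tail3) (metis S1 q1234_mult q1234_tens)
lemma T2: "bilin MR (q234 Pli) (bilin MR (q234 (Il (lam u))) Z) = bilin MR (q234 (dIII (lam u))) (bilin MR (q234 Pli) Z)"
  by (rule tail2) (metis S2 q234_mult)
lemma T3: "bilin MR (q456 (rI (rho w))) (bilin MR (q456 Pri) Z) = bilin MR (q456 Pri) (bilin MR (q456 (IdR (rho w))) Z)"
  by (rule tail2) (metis S3 q456_mult)
lemma T4: "bilin MR (q4567 (rI Pri)) (q4567 (IIdI Pri)) = bilin MR (q456 Pri) (bilin MR (q4567 (IdII Pri)) (q4567 (tens uU Phii)))"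
  by (metis S4 q4567_mult q4567_app1)
lemma T5: "bilin MR (q2345 (dIII Plri)) (bilin MR (q2345 (IIr Pli)) Z)
  = bilin MR (q234 Pli) (bilin MR (q2345 (IlI Plri)) (bilin MR (q345 Plri) Z))"
  by (rule tail3') (metis S5 q2345_mult q2345_app1 q2345_tens)
lemma T6: "bilin MR (q345 Plri) (bilin MR (q3456 (IrI Plri)) (bilin MR (q456 Pri) Z))
  = bilin MR (q3456 (lI Pri)) (bilin MR (q3456 (IIdI Plri)) Z)"
  by (rule tail3) (metis S6 q3456_mult q3456_app1 q3456_tens)
lemma T7: "bilin MR (q345 Plri) (bilin MR (q345 (Ir (lam v))) Z) = bilin MR (q345 (lI (rho v))) (bilin MR (q345 Plri) Z)"
  by (rule tail2) (metis S7 q345_mult)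

lemma II: "L (Q u v) w = L' u (Q v w)"
  unfolding L_def L'_def Q_def
  apply (simp only: iota_mult iota'_mult iota_p123 iota_p23 iota_p234 iota_p34 iota_p345
     iota'_p123 iota'_p23 iota'_p234 iota'_p34 iota'_p345 Rassoc)
  apply (simp only: T1 T2 T4)
  apply (simp only: T3)
  apply (simp only: T5)
  apply (simp only: T7)
  apply (simp only: T6)
  done

end


lemma eq_basis_p5r: assumes "lf F" "lf G" "\<And>a b c d x. F (bas (a, b, c, d, x)) = G (bas (a, b, c, d, x))"
  shows "F y = G y"
proof (rule eq_basis1[OF assms(1,2)])
  fix i show "F (bas i) = G (bas i)"
    using assms(3)[of "fst i" "fst (snd i)" "fst (snd (snd i))" "fst (snd (snd (snd i)))" "snd (snd (snd (snd i)))"] by simp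
qed

context smash
begin

lemma Ia_gen: "bilin SM (E2 f g W) (bas (h, w)) = E f g (bas h) (L W w)"
  by (rule eq_basis_p5r[where F="\<lambda>W. bilin SM (E2 f g W) (bas (h, w))"])
     (simp add: E2_def, simp add: E_def L_def iota_def, rule Ia)

lemma Ib_gen: "bilin SM (bas (f, u)) (E2 g h W) = E (bas f) g h (L' u W)"
  by (rule eq_basis_p5r[where F="\<lambda>W. bilin SM (bas (f, u)) (E2 g h W)"])
     (simp add: E2_def, simp add: E_def L'_def iota'_def, rule Ib)

lemma assoc_bas: "bilin SM (bilin SM (bas i) (bas j)) (bas k) = bilin SM (bas i) (bilin SM (bas j) (bas k))"
proof -
  obtain f u g v h w where ijk: "i = (f, u)" "j = (g, v)" "k = (h, w)" by fastforce
  have "bilin SM (bilin SM (bas (f, u)) (bas (g, v))) (bas (h, w)) = bilin SM (E2 (bas f) (bas g) (Q u v)) (bas (h, w))"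
    by (simp add: bilin_bas Ic)
  also have "\<dots> = E (bas f) (bas g) (bas h) (L (Q u v) w)" by (rule Ia_gen)
  also have "\<dots> = E (bas f) (bas g) (bas h) (L' u (Q v w))" by (simp only: II)
  also have "\<dots> = bilin SM (bas (f, u)) (E2 (bas g) (bas h) (Q v w))" by (rule Ib_gen[symmetric])
  also have "\<dots> = bilin SM (bas (f, u)) (bilin SM (bas (g, v)) (bas (h, w)))"
    by (simp add: bilin_bas Ic)
  finally show ?thesis using ijk by simp
qed

lemma SM_assoc: "bilin SM (bilin SM x y) z = bilin SM x (bilin SM y z)"
  by (rule eq_basis3[where F="\<lambda>x y z. bilin SM (bilin SM x y) z"]) (simp_all add: assoc_bas)

end


lemma lfun_add[simp]: "lfun e (x + y) = lfun e x + lfun e y"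
proof -
  let ?S = "Poly_Mapping.keys x \<union> Poly_Mapping.keys y"
  have fin: "finite ?S" by simp
  have s: "lfun e z = (\<Sum>i\<in>?S. Poly_Mapping.lookup z i * e i)" if "Poly_Mapping.keys z \<subseteq> ?S" for z
    unfolding lfun_def using that fin by (intro sum.mono_neutral_left) (auto simp: in_keys_iff)
  have "Poly_Mapping.keys (x + y) \<subseteq> ?S" by (rule Poly_Mapping.keys_add)
  then show ?thesis by (simp add: s Poly_Mapping.lookup_add distrib_right sum.distrib)
qed
lemma lfun_vsc[simp]: "lfun e (vsc c x) = c * lfun e x"
proof -
  have "lfun e (vsc c x) = (\<Sum>i\<in>Poly_Mapping.keys x. Poly_Mapping.lookup (vsc c x) i * e i)"
    unfolding lfun_def by (intro sum.mono_neutral_left) (auto simp: in_keys_iff)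
  then show ?thesis by (simp add: lfun_def sum_distrib_left mult.assoc)
qed
lemma lfun_bas[simp]: "lfun e (bas i) = e i"
  by (simp add: lfun_def bas_def)

lemma lf_lfun[simp]: "lf g \<Longrightarrow> lf (\<lambda>x. vsc (lfun e (g x)) y)"
  unfolding lf_def by (simp add: lfD1[of g] lfD2[of g] vsc_add2)

declare vsc_vsc[simp del]
lemma vsc_mult: "vsc (a * b) x = vsc a (vsc b x)" by (simp add: vsc_vsc)

lemma sw_fvsc_simp[simp]: "sw T (\<lambda>a b. vsc c (K a b)) = vsc c (sw T K)"
  by (rule sw_fvsc)

lemma bilin_vsc1'[simp]: "bilin m (vsc c x) y = vsc c (bilin m x y)" by simp

context smash
begin

definition "eF T = sw T (\<lambda>a y. vsc (lfun e a) y)"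
definition "eS T = sw T (\<lambda>x a. vsc (lfun e a) x)"
definition "eM T = sw T (\<lambda>x y. sw y (\<lambda>a z. vsc (lfun e a) (tens x z)))"
definition "eL3 T = sw T (\<lambda>x y. tens x (eS y))"

lemma eF_tens[simp]: "eF (tens x y) = vsc (lfun e x) y" by (simp add: eF_def)
lemma eS_tens[simp]: "eS (tens x y) = vsc (lfun e y) x" by (simp add: eS_def)
lemma eM_tens[simp]: "eM (tens x (tens y z)) = vsc (lfun e y) (tens x z)" by (simp add: eM_def)
lemma eL3_tens[simp]: "eL3 (tens x (tens y z)) = vsc (lfun e z) (tens x y)" by (simp add: eL3_def eS_def)


definition "eL4 T = sw T (\<lambda>x y. tens x (eL3 y))"
lemma eL4_tens[simp]: "eL4 (tens x (tens y (tens z t))) = vsc (lfun e t) (tens x (tens y z))"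
  by (simp add: eL4_def eL3_def eS_def)

lemma lf_eF[simp]: "lf g \<Longrightarrow> lf (\<lambda>x. eF (g x))" unfolding eF_def by simp
lemma lf_eS[simp]: "lf g \<Longrightarrow> lf (\<lambda>x. eS (g x))" unfolding eS_def by simp
lemma lf_eM[simp]: "lf g \<Longrightarrow> lf (\<lambda>x. eM (g x))" unfolding eM_def by simp
lemma lf_eL3[simp]: "lf g \<Longrightarrow> lf (\<lambda>x. eL3 (g x))" unfolding eL3_def by simp
lemma lf_eL4[simp]: "lf g \<Longrightarrow> lf (\<lambda>x. eL4 (g x))" unfolding eL4_def by simp

lemma epsFirst_eF: "lin (epsFirst e) X = eF X"
  by (rule eq_basis_p3r) (simp_all add: epsFirst_def tens_bas eF_def)
lemma epsL_eF: "lin (epsL e) X = eF X"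
  by (rule eq_basis_p2) (simp_all add: epsL_def tens_bas eF_def)
lemma epsR_eS: "lin (epsR e) X = eS X"
  by (rule eq_basis_p2) (simp_all add: epsR_def tens_bas eS_def)
lemma epsMid_eM: "lin (epsMid e) X = eM X"
  by (rule eq_basis_p3r) (simp_all add: epsMid_def eM_def)
lemma epsLast_eL3: "lin (epsLast e) X = eL3 X"
  by (rule eq_basis_p3r) (simp_all add: epsLast_def eL3_def eS_def)

lemma cF_Pl: "eF Pl = tens uH uU" and cM_Pl: "eM Pl = tens uH uU"
  using LC unfolding left_comodule_algebra_def Let_def epsFirst_eF epsMid_eM by auto
lemma cM_Pr: "eM Pr = tens uU uH" and cL_Pr: "eL3 Pr = tens uU uH"
  using RC unfolding right_comodule_algebra_def Let_def epsMid_eM epsLast_eL3 by auto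
lemma c_lam[simp]: "eF (lin lam x) = x"
  using LC unfolding left_comodule_algebra_def Let_def epsL_eF by auto
lemma c_rho[simp]: "eS (lin rho x) = x"
  using RC unfolding right_comodule_algebra_def Let_def epsR_eS by auto
lemma c_DL[simp]: "eF (lin D x) = x" and c_DR[simp]: "eS (lin D x) = x"
  using QB unfolding quasi_bialgebra_def Let_def epsL_eF epsR_eS by auto

lemma push_eF: "eF (sw T F) = sw T (\<lambda>a b. eF (F a b))"
  by (rule sw_push[of eF]) (simp add: lf_def eF_def)

lemma eF_fold1: "sw T (\<lambda>x y. vsc (lfun e x) (tens y z)) = tens (eF T) z"
  by (simp add: eF_def)
lemma tens_fold2: "sw T (\<lambda>x y. tens z (tens x y)) = tens z T"
  using push_tens2[of z T tens] by (simp add: sw_tens_id)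
lemma c_lam_bas[simp]: "eF (lam a) = bas a" using c_lam[of "bas a"] by simp
lemma c_rho_bas[simp]: "eS (rho a) = bas a" using c_rho[of "bas a"] by simp
lemma c_DL_bas[simp]: "eF (D a) = bas a" using c_DL[of "bas a"] by simp
lemma c_DR_bas[simp]: "eS (D a) = bas a" using c_DR[of "bas a"] by simp
lemma lin_reas_tens1: "lin reas (tens T z) = sw T (\<lambda>x y. tens x (tens y z))"
  by (rule eq_basis_p2[where F="\<lambda>T. lin reas (tens T z)"]) (simp_all add: lin_reas_tens tens_bas[symmetric])

lemma eF_mult: "eF (bilin (tmult mH M) X Y) = bilin M (eF X) (eF Y)"
  by (rule eq_basis2[where F="\<lambda>X Y. eF (bilin (tmult mH M) X Y)"])
     (simp_all add: split_paired_all tens_bas[symmetric] vsc_vsc mult_ac del: tens_bas)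
lemma eS_mult: "eS (bilin (tmult M mH) X Y) = bilin M (eS X) (eS Y)"
  by (rule eq_basis2[where F="\<lambda>X Y. eS (bilin (tmult M mH) X Y)"])
     (simp_all add: split_paired_all tens_bas[symmetric] vsc_vsc mult_ac del: tens_bas)
lemma eM_mult: "eM (bilin (tmult m1 (tmult mH m3)) X Y) = bilin (tmult m1 m3) (eM X) (eM Y)"
  by (rule eq_basis2[where F="\<lambda>X Y. eM (bilin (tmult m1 (tmult mH m3)) X Y)"])
     (simp_all add: split_paired_all tens_bas[symmetric] vsc_vsc mult_ac del: tens_bas)
lemma eL3_mult: "eL3 (bilin (tmult m1 (tmult m2 mH)) X Y) = bilin (tmult m1 m2) (eL3 X) (eL3 Y)"
  by (rule eq_basis2[where F="\<lambda>X Y. eL3 (bilin (tmult m1 (tmult m2 mH)) X Y)"])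
     (simp_all add: split_paired_all tens_bas[symmetric] vsc_vsc mult_ac del: tens_bas)
lemma eL4_mult: "eL4 (bilin (tmult m1 (tmult m2 (tmult m3 mH))) X Y) = bilin (tmult m1 (tmult m2 m3)) (eL4 X) (eL4 Y)"
  by (rule eq_basis2[where F="\<lambda>X Y. eL4 (bilin (tmult m1 (tmult m2 (tmult m3 mH))) X Y)"])
     (simp_all add: split_paired_all tens_bas[symmetric] vsc_vsc mult_ac del: tens_bas)


lemma unit_inv_gen:
  assumes A: "assoc_alg M' u'" and hom: "\<And>X Y. \<phi> (bilin M X Y) = bilin M' (\<phi> X) (\<phi> Y)"
    and inv: "inv_pair M u P Pi" and "\<phi> u = u'" "\<phi> P = u'"
  shows "\<phi> Pi = u'"
proof -
  have "\<phi> Pi = bilin M' (\<phi> P) (\<phi> Pi)" using A assms(5) unfolding assoc_alg_def by simp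
  also have "\<dots> = \<phi> (bilin M P Pi)" by (simp add: hom)
  also have "\<dots> = u'" using inv assms(4) unfolding inv_pair_def by simp
  finally show ?thesis .
qed

lemma cF_Pli: "eF Pli = tens uH uU"
  by (rule unit_inv_gen[where \<phi>=eF, OF AHU eF_mult Pl_inv]) (simp_all add: cF_Pl)
lemma cM_Pli: "eM Pli = tens uH uU"
  by (rule unit_inv_gen[where \<phi>=eM, OF AHU eM_mult Pl_inv]) (simp_all add: cM_Pl)
lemma cM_Pri: "eM Pri = tens uU uH"
  by (rule unit_inv_gen[where \<phi>=eM, OF AUH eM_mult Pr_inv]) (simp_all add: cM_Pr)
lemma cL_Pri: "eL3 Pri = tens uU uH"
  by (rule unit_inv_gen[where \<phi>=eL3, OF AUH eL3_mult Pr_inv]) (simp_all add: cL_Pr)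

lemma eF_IlI: "eF (IlI X) = lI (eF X)"
  by (rule eq_basis_p3r[where F="\<lambda>X. eF (IlI X)"]) (simp_all add: IlI_def lI_def eF_def)
lemma eF_app1: "eF (lin (app1 uH) X) = sw (eF X) (\<lambda>b c. tens b (tens c uH))"
  by (rule eq_basis_p3r[where F="\<lambda>X. eF (lin (app1 uH) X)"]) (simp_all add: eF_def)
lemma eF_IIr: "eF (IIr X) = Ir (eF X)"
  by (rule eq_basis_p3r[where F="\<lambda>X. eF (IIr X)"]) (simp_all add: IIr_def Ir_def eF_def)
lemma eF_dIII: "eF (dIII X) = X"
  by (rule eq_basis_p2[where F="\<lambda>X. eF (dIII X)"]) (simp_all add: dIII_def lin_reas_tens1 push_eF eF_fold1 tens_bas)
lemma eF_lI: "eF (lI Y) = Y"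
  by (rule eq_basis_p2[where F="\<lambda>Y. eF (lI Y)"]) (simp_all add: lI_def lin_reas_tens1 push_eF eF_fold1 tens_bas)

lemma eL4_IrI: "eL4 (IrI X) = Ir (eL3 X)"
  by (rule eq_basis_p3r[where F="\<lambda>X. eL4 (IrI X)"]) (simp_all add: IrI_def Ir_def eL4_def eL3_def eS_def tens_fold2)
lemma eL4_app1: "eL4 (lin (app1 uH) X) = X"
  by (rule eq_basis_p3r[where F="\<lambda>X. eL4 (lin (app1 uH) X)"]) (simp_all add: tens_bas)
lemma eL4_IIdI: "eL4 (IIdI X) = X"
  by (rule eq_basis_p3r[where F="\<lambda>X. eL4 (IIdI X)"]) (simp_all add: IIdI_def eL4_def eL3_def tens_bas)
lemma eL4_lI: "eL4 (lI Y) = lI (eL3 Y)"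
  by (rule eq_basis_p3r[where F="\<lambda>Y. eL4 (lI Y)"]) (simp_all add: lI_def eL4_def eL3_def eS_def lin_reas_tens1)
lemma eL3_Ir: "eL3 (Ir Y) = Y"
  by (rule eq_basis_p2[where F="\<lambda>Y. eL3 (Ir Y)"]) (simp_all add: Ir_def eL3_def tens_bas)
lemma eL4_tensL: "eL4 (tens x X) = tens x (eL3 X)"
  by (simp add: eL4_def)

lemma cF_Plr: "eF Plr = tens uU uH"
proof -
  have h: "bilin M3m (bilin M3m Plr (lI (eF Plr))) (tens uH (tens uU uH)) = bilin M3m (tens uH (tens uU uH)) Plr"
    using arg_cong[OF ax_b2, of eF]
    by (simp add: eF_mult eF_IlI eF_app1 eF_IIr eF_dIII cF_Pl Ir_def)
  have h2: "bilin M3m Plr (lI (eF Plr)) = Plr" using h AA[OF A3m] by simp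
  have "lI (eF Plr) = tens uH (tens uU uH)"
    using arg_cong[OF h2, of "bilin M3m Plri"] Plr_inv AA[OF A3m] unfolding inv_pair_def by (simp flip: AA(1)[OF A3m])
  then have "eF (lI (eF Plr)) = eF (tens uH (tens uU uH))" by simp
  then show ?thesis by (simp add: eF_lI)
qed

lemma cL_Plr: "eL3 Plr = tens uH uU"
proof -
  have e1: "eL4 (lI Pr) = tens uH (tens uU uH)" by (simp only: eL4_lI cL_Pr) (simp add: lI_def)
  have h: "bilin M3m (bilin M3m (tens uH (tens uU uH)) (Ir (eL3 Plr))) Plr = bilin M3m Plr (tens uH (tens uU uH))"
    using arg_cong[OF ax_b3, of eL4] e1
    by (simp add: eL4_mult eL4_IrI eL4_app1 eL4_IIdI eL4_tensL cL_Pr)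
  have h2: "bilin M3m (Ir (eL3 Plr)) Plr = Plr" using h AA[OF A3m] by simp
  have "Ir (eL3 Plr) = tens uH (tens uU uH)"
    using arg_cong[OF h2, of "\<lambda>t. bilin M3m t Plri"] Plr_inv AA[OF A3m] unfolding inv_pair_def by simp
  then have "eL3 (Ir (eL3 Plr)) = eL3 (tens uH (tens uU uH))" by simp
  then show ?thesis by (simp add: eL3_Ir)
qed

lemma cF_Plri: "eF Plri = tens uU uH"
  by (rule unit_inv_gen[where \<phi>=eF, OF AUH eF_mult Plr_inv]) (simp_all add: cF_Plr)
lemma cL_Plri: "eL3 Plri = tens uH uU"
  by (rule unit_inv_gen[where \<phi>=eL3, OF AHU eL3_mult Plr_inv]) (simp_all add: cL_Plr)

end


context smash
begin

definition "SMg x y x' y' = sw3 Pli (\<lambda>l1 l2 l3. sw3 Plri (\<lambda>t1 t2 t3. sw3 Pri (\<lambda>r1 r2 r3.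
   sw (lin lam y) (\<lambda>p q. sw (lin rho y') (\<lambda>s w. tens (bilin mA (act l1 x (bilin mH t3 (bilin mH w r2)))
     (act (bilin mH l2 (bilin mH p t1)) x' r3)) (bilin mU l3 (bilin mU q (bilin mU t2 (bilin mU s r1)))))))))"

lemma SM_gen: "bilin SM (tens x y) (tens x' y') = SMg x y x' y'"
proof (rule eq_basis2[where F="\<lambda>x y. bilin SM (tens x y) (tens x' y')"])
  fix i j
  show "bilin SM (tens (bas i) (bas j)) (tens x' y') = SMg (bas i) (bas j) x' y'"
  proof (rule eq_basis2[where F="\<lambda>x' y'. bilin SM (tens (bas i) (bas j)) (tens x' y')"])
    fix k l
    show "bilin SM (tens (bas i) (bas j)) (tens (bas k) (bas l)) = SMg (bas i) (bas j) (bas k) (bas l)"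
      by (simp add: tens_bas bilin_bas SM_sw SMg_def)
  qed (simp_all add: SMg_def)
qed (simp_all add: SMg_def)

lemma lf_comp: "lf K \<Longrightarrow> lf g \<Longrightarrow> lf (\<lambda>a. K (g a))"
  unfolding lf_def by simp

lemma abs_F3: "sw T (\<lambda>a y. vsc (lfun e a) (sw y K)) = sw (eF T) K"
  by (rule eq_basis_p3r[where F="\<lambda>T. sw T (\<lambda>a y. vsc (lfun e a) (sw y K))"])
     (simp_all add: eF_def tens_bas)
lemma abs_M3: "sw3 T (\<lambda>a b c. vsc (lfun e b) (K a c)) = sw (eM T) K"
  by (rule eq_basis_p3r[where F="\<lambda>T. sw3 T (\<lambda>a b c. vsc (lfun e b) (K a c))"])
     (simp_all add: eM_def tens_bas)
lemma abs_L3: "sw3 T (\<lambda>a b c. vsc (lfun e c) (K a b)) = sw (eL3 T) K"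
  by (rule eq_basis_p3r[where F="\<lambda>T. sw3 T (\<lambda>a b c. vsc (lfun e c) (K a b))"])
     (simp_all add: eL3_def eS_def tens_bas)
lemma abs_S2: "lf K \<Longrightarrow> sw T (\<lambda>a b. vsc (lfun e b) (K a)) = K (eS T)"
  apply (rule eq_basis_p2[where F="\<lambda>T. sw T (\<lambda>a b. vsc (lfun e b) (K a))"])
    apply simp
   apply (rule lf_comp, assumption, simp add: eS_def)
  apply (simp add: eS_def lfD2)
  done
lemma abs_F2: "lf K \<Longrightarrow> sw T (\<lambda>a b. vsc (lfun e a) (K b)) = K (eF T)"
  apply (rule eq_basis_p2[where F="\<lambda>T. sw T (\<lambda>a b. vsc (lfun e a) (K b))"])
    apply simp
   apply (rule lf_comp, assumption, simp add: eF_def)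
  apply (simp add: eF_def lfD2)
  done

lemma eM_alt: "eM T = sw T (\<lambda>x y. tens x (eF y))"
  by (simp add: eM_def eF_def)
lemma abs_M3': assumes "\<And>b. lf (\<lambda>a. K a b)" "\<And>a. lf (\<lambda>b. K a b)"
  shows "sw T (\<lambda>a y. K a (eF y)) = sw (eM T) K"
  unfolding eM_alt using assms by simp
lemma abs_L3': assumes "\<And>b. lf (\<lambda>a. K a b)" "\<And>a. lf (\<lambda>b. K a b)"
  shows "sw T (\<lambda>a y. K a (eS y)) = sw (eL3 T) K"
  unfolding eL3_def using assms by simp

lemma left_unit_bas: "bilin SM (tens uA uU) (bas (g, v)) = bas (g, v)"
  apply (simp add: tens_bas[symmetric] SM_gen del: tens_bas)
  apply (simp add: SMg_def vsc_mult abs_F3 abs_M3 abs_L3 abs_S2[where T="rho v"] cF_Pli cM_Pri cL_Plri)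
  done


lemma right_unit_bas: "bilin SM (bas (f, u)) (tens uA uU) = bas (f, u)"
  apply (simp add: tens_bas[symmetric] SM_gen del: tens_bas)
  apply (simp add: SMg_def vsc_mult abs_F3 abs_M3 abs_L3 abs_F2[where T="lam u"] cM_Pli cF_Plri cL_Pri)
  done

lemma SM_assoc_alg: "assoc_alg SM (tens uA uU)"
  unfolding assoc_alg_def
proof (intro allI conjI)
  fix x y z
  show "bilin SM (bilin SM x y) z = bilin SM x (bilin SM y z)" by (rule SM_assoc)
  show "bilin SM (tens uA uU) x = x"
    by (rule eq_basis_p2[where F="\<lambda>x. bilin SM (tens uA uU) x"]) (simp_all add: left_unit_bas)
  show "bilin SM x (tens uA uU) = x"
    by (rule eq_basis_p2[where F="\<lambda>x. bilin SM x (tens uA uU)"]) (simp_all add: right_unit_bas)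
qed

end

theorem mainTheorem1:
  fixes mH :: "'h \<Rightarrow> 'h \<Rightarrow> ('h \<Rightarrow>\<^sub>0 'k::field)" and uH :: "'h \<Rightarrow>\<^sub>0 'k"
    and D :: "'h \<Rightarrow> ('h \<times> 'h \<Rightarrow>\<^sub>0 'k)" and e :: "'h \<Rightarrow> 'k"
    and Phi Phii :: "'h \<times> 'h \<times> 'h \<Rightarrow>\<^sub>0 'k"
    and la :: "'h \<Rightarrow> 'a \<Rightarrow> ('a \<Rightarrow>\<^sub>0 'k)" and ra :: "'a \<Rightarrow> 'h \<Rightarrow> ('a \<Rightarrow>\<^sub>0 'k)"
    and mA :: "'a \<Rightarrow> 'a \<Rightarrow> ('a \<Rightarrow>\<^sub>0 'k)" and uA :: "'a \<Rightarrow>\<^sub>0 'k"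
    and mU :: "'u \<Rightarrow> 'u \<Rightarrow> ('u \<Rightarrow>\<^sub>0 'k)" and uU :: "'u \<Rightarrow>\<^sub>0 'k"
    and lam :: "'u \<Rightarrow> ('h \<times> 'u \<Rightarrow>\<^sub>0 'k)" and rho :: "'u \<Rightarrow> ('u \<times> 'h \<Rightarrow>\<^sub>0 'k)"
    and Pl Pli :: "'h \<times> 'h \<times> 'u \<Rightarrow>\<^sub>0 'k"
    and Pr Pri :: "'u \<times> 'h \<times> 'h \<Rightarrow>\<^sub>0 'k"
    and Plr Plri :: "'h \<times> 'u \<times> 'h \<Rightarrow>\<^sub>0 'k"
  assumes "quasi_bialgebra mH uH D e Phi Phii"
    and "bimodule_algebra mH uH D e Phi Phii la ra mA uA"
    and "bicomodule_algebra mH uH D e Phi mU uU lam rho Pl Pli Pr Pri Plr Plri"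
  shows "assoc_alg (smash_mult mH mU la ra mA lam rho Pli Plri Pri) (tens uA uU)"
proof -
  interpret smash mH uH D e Phi Phii la ra mA uA mU uU lam rho Pl Pli Pr Pri Plr Plri
    using assms by unfold_locales
  show ?thesis by (rule SM_assoc_alg)
qed


end
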